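(* Suppose $\|\nabla f(w;z)\|\le G$ for all $w\in\mathcal{K}$, $z\in\Omega$. Let $M\in\mathbb{N}$, $K\in\{1,\dots,M\}$ and $n=\lfloor M/K\rfloor$. Then for every $\delta>(K(n-1)+1)d_{\mathrm{mix}}(K)$ and every $w_t\in\mathcal{K}$ that is $\mathcal{F}_{t-1}$-measurable, \[ \mathbb{P}_{t-1}\Big(\Big\|\frac1M\sum_{i=1}^M\nabla f(w_t;z_t^{(K+i)})-\nabla F(w_t)\Big\|\le\frac{6G}{\sqrt n}\Big(1+\sqrt{\log(K/\delta')}\Big)+\frac{2GK}{M}\Big)\ge1-\delta, \] where $\delta'=\delta-(K(n-1)+1)d_{\mathrm{mix}}(K)$.
   Context: Let $\Omega$ be a finite set and $(z_k)_{k\ge1}$ an ergodic time-homogeneous Markov chain on $\Omega$ (arbitrary, not necessarily stationary, initial distribution) with stationary distribution $\mu$. For probability measures $P,Q$ on $\Omega$, $\|P-Q\|_{TV}=\sup_A|P(A)-Q(A)|$; $P^s(z,\cdot)$ is the law of $z_{s+1}$ given $z_1=z$, and $d_{\mathrm{mix}}(s)=\sup_z\|P^s(z,\cdot)-\mu\|_{TV}$. $\mathcal{K}\subseteq\mathbb{R}^d$; $f(\cdot;z)$ is differentiable and $F(w)=\mathbb{E}_{z\sim\mu}[f(w;z)]$. Samples are grouped by iterations: positive integers $N_1,N_2,\dots$ are drawn independently of the chain (each $N_s=2^{J_s}$ with $\mathbb{P}(J_s=j)=2^{-j}$, $j\ge 1$, independently), and $z_t^{(i)}=z_{S_{t-1}+i}$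 for $i\ge1$, where $S_{t-1}=N_1+\dots+N_{t-1}$. $\mathcal{F}_{t-1}$ is the $\sigma$-field generated by $N_1,\dots,N_{t-1}$ and the samples $z_s^{(i)}$, $s\le t-1$, $i\le N_s$; $\mathbb{P}_{t-1}$ is conditional probability given $\mathcal{F}_{t-1}$ (the inequality holds almost surely). $\log$ is the natural logarithm. *)

theory Defs
  imports "HOL-Probability.Probability"
begin

fun mpow :: "('s::finite \<Rightarrow> 's \<Rightarrow> real) \<Rightarrow> nat \<Rightarrow> 's \<Rightarrow> 's \<Rightarrow> real" where
  "mpow P 0 x y = (if x = y then 1 else 0)"
| "mpow P (Suc s) x y = (\<Sum>u\<in>UNIV. mpow P s x u * P u y)"

definition stochastic :: "('s::finite \<Rightarrow> 's \<Rightarrow> real) \<Rightarrow> bool" where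
  "stochastic P \<longleftrightarrow> (\<forall>x y. 0 \<le> P x y) \<and> (\<forall>x. (\<Sum>y\<in>UNIV. P x y) = 1)"

definition irreducible_chain :: "('s::finite \<Rightarrow> 's \<Rightarrow> real) \<Rightarrow> bool" where
  "irreducible_chain P \<longleftrightarrow> (\<forall>x y. \<exists>n>0. mpow P n x y > 0)"

definition aperiodic_chain :: "('s::finite \<Rightarrow> 's \<Rightarrow> real) \<Rightarrow> bool" where
  "aperiodic_chain P \<longleftrightarrow> (\<forall>x. Gcd {n. n > 0 \<and> mpow P n x x > 0} = 1)"

definition ergodic_chain :: "('s::finite \<Rightarrow> 's \<Rightarrow> real) \<Rightarrow> bool" where
  "ergodic_chain P \<longleftrightarrow> stochastic P \<and> irreducible_chain P \<and> aperiodic_chain P"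

definition stationary_dist :: "('s::finite \<Rightarrow> 's \<Rightarrow> real) \<Rightarrow> ('s \<Rightarrow> real) \<Rightarrow> bool" where
  "stationary_dist P mu \<longleftrightarrow> (\<forall>x. 0 \<le> mu x) \<and> (\<Sum>x\<in>UNIV. mu x) = 1 \<and>
     (\<forall>y. (\<Sum>x\<in>UNIV. mu x * P x y) = mu y)"

definition tv_dist :: "('s::finite \<Rightarrow> real) \<Rightarrow> ('s \<Rightarrow> real) \<Rightarrow> real" where
  "tv_dist p q = Max ((\<lambda>A. \<bar>(\<Sum>x\<in>A. p x) - (\<Sum>x\<in>A. q x)\<bar>) ` (UNIV :: 's set set))"

definition d_mix :: "('s::finite \<Rightarrow> 's \<Rightarrow> real) \<Rightarrow> ('s \<Rightarrow> real) \<Rightarrow> nat \<Rightarrow> real" where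
  "d_mix P mu s = Max ((\<lambda>x. tv_dist (mpow P s x) mu) ` (UNIV :: 's set))"

text \<open>Time-homogeneous Markov chain z_1, z_2, ... (index from 1) with transition matrix P
  on the probability space M, arbitrary initial distribution.\<close>
definition markov_chain_on :: "'a measure \<Rightarrow> ('s::finite \<Rightarrow> 's \<Rightarrow> real) \<Rightarrow> (nat \<Rightarrow> 'a \<Rightarrow> 's) \<Rightarrow> bool" where
  "markov_chain_on M P z \<longleftrightarrow>
     (\<forall>k\<ge>1. z k \<in> measurable M (count_space UNIV)) \<and>
     (\<forall>k\<ge>1. \<forall>xs :: nat \<Rightarrow> 's.
        measure M {\<omega>\<in>space M. \<forall>i\<in>{1..Suc k}. z i \<omega> = xs i}
        = measure M {\<omega>\<in>space M. \<forall>i\<in>{1..k}. z i \<omega> = xs i} * P (xs k) (xs (Suc k)))"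

text \<open>Batch sizes N_1, N_2, ...: N_s = 2^J_s with P(J_s = j) = 2^-j (j >= 1), the N_s mutually
  independent and independent of the chain (joint pmf factorisation).\<close>
definition batch_sizes :: "'a measure \<Rightarrow> (nat \<Rightarrow> 'a \<Rightarrow> 's) \<Rightarrow> (nat \<Rightarrow> 'a \<Rightarrow> nat) \<Rightarrow> bool" where
  "batch_sizes M z N \<longleftrightarrow>
     (\<forall>s\<ge>1. N s \<in> measurable M (count_space UNIV)) \<and>
     (\<forall>s\<ge>1. \<forall>j\<ge>1. measure M {\<omega>\<in>space M. N s \<omega> = 2 ^ j} = 1 / 2 ^ j) \<and>
     (\<forall>k m. \<forall>xs :: nat \<Rightarrow> 's. \<forall>ns :: nat \<Rightarrow> nat.
        measure M {\<omega>\<in>space M. (\<forall>i\<in>{1..k}. z i \<omega> = xs i) \<and> (\<forall>s\<in>{1..m}. N s \<omega> = ns s)}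
        = measure M {\<omega>\<in>space M. \<forall>i\<in>{1..k}. z i \<omega> = xs i} *
          (\<Prod>s\<in>{1..m}. measure M {\<omega>\<in>space M. N s \<omega> = ns s}))"

definition S_before :: "(nat \<Rightarrow> 'a \<Rightarrow> nat) \<Rightarrow> nat \<Rightarrow> 'a \<Rightarrow> nat" where
  "S_before N t \<omega> = (\<Sum>s\<in>{1..<t}. N s \<omega>)"

text \<open>F_{t-1}: sigma-field generated by N_1..N_{t-1} and the samples z_1, ..., z_{S_{t-1}}
  (i.e. all z_s^(i), s <= t-1, i <= N_s), all discrete.\<close>
definition hist_sigma :: "'a measure \<Rightarrow> (nat \<Rightarrow> 'a \<Rightarrow> 's) \<Rightarrow> (nat \<Rightarrow> 'a \<Rightarrow> nat) \<Rightarrow> nat \<Rightarrow> 'a measure" where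
  "hist_sigma M z N t = vimage_algebra (space M)
     (\<lambda>\<omega>. (map (\<lambda>s. N s \<omega>) [1..<t], map (\<lambda>k. z k \<omega>) [1..<Suc (S_before N t \<omega>)]))
     (count_space UNIV)"

end

theory Submission
  imports Defs
begin

fun mexp :: "('s::finite \<Rightarrow> 's \<Rightarrow> real) \<Rightarrow> nat \<Rightarrow> ('s list \<Rightarrow> real) \<Rightarrow> 's \<Rightarrow> real" where
  "mexp Q 0 F x = F []"
| "mexp Q (Suc k) F x = (\<Sum>y\<in>UNIV. Q x y * mexp Q k (\<lambda>ys. F (y # ys)) y)"

fun iexp :: "('s::finite \<Rightarrow> real) \<Rightarrow> nat \<Rightarrow> ('s list \<Rightarrow> real) \<Rightarrow> real" where
  "iexp p 0 F = F []"
| "iexp p (Suc k) F = (\<Sum>y\<in>UNIV. p y * iexp p k (\<lambda>ys. F (y # ys)))"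

lemma mexp_mono:
  assumes "\<And>x y. 0 \<le> Q x y" "\<And>ys. length ys = k \<Longrightarrow> F ys \<le> F' ys"
  shows "mexp Q k F x \<le> mexp Q k F' x"
  using assms(2)
proof (induction k arbitrary: F F' x)
  case 0 then show ?case by simp
next
  case (Suc k)
  show ?case unfolding mexp.simps
    by (intro sum_mono mult_left_mono Suc.IH Suc.prems assms(1)) auto
qed

lemma mexp_cong:
  assumes "\<And>ys. length ys = k \<Longrightarrow> F ys = F' ys"
  shows "mexp Q k F x = mexp Q k F' x"
  using assms
proof (induction k arbitrary: F F' x)
  case 0 then show ?case by simp
next
  case (Suc k)
  show ?case unfolding mexp.simps
    by (intro sum.cong refl arg_cong2[where f="(*)"] Suc.IH Suc.prems) auto
qed

lemma mexp_const:
  assumes "stochastic Q"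
  shows "mexp Q k (\<lambda>_. c) x = c"
proof (induction k arbitrary: x)
  case 0 then show ?case by simp
next
  case (Suc k)
  have "(\<Sum>y\<in>UNIV. Q x y * c) = c" using assms unfolding stochastic_def
    by (simp add: sum_distrib_right[symmetric])
  then show ?case using Suc by simp
qed

lemma mexp_add:
  "mexp Q k (\<lambda>ys. F ys + F' ys) x = mexp Q k F x + mexp Q k F' x"
proof (induction k arbitrary: F F' x)
  case 0 then show ?case by simp
next
  case (Suc k)
  show ?case by (simp add: Suc.IH distrib_left sum.distrib)
qed

lemma mexp_cmult:
  "mexp Q k (\<lambda>ys. c * F ys) x = c * mexp Q k F x"
proof (induction k arbitrary: F x)
  case 0 then show ?case by simp
next
  case (Suc k)
  show ?case by (simp add: Suc.IH sum_distrib_left algebra_simps)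
qed

lemma mexp_sum:
  assumes "finite J"
  shows "mexp Q k (\<lambda>ys. \<Sum>j\<in>J. F j ys) x = (\<Sum>j\<in>J. mexp Q k (F j) x)"
  using assms
proof (induction J rule: finite_induct)
  case empty
  have "mexp Q k (\<lambda>ys. 0 * 0) x = 0 * mexp Q k (\<lambda>_. 0) x" by (rule mexp_cmult)
  then show ?case by simp
next
  case (insert j J)
  then show ?case by (simp add: mexp_add)
qed

lemma mexp_append:
  "mexp Q (a + b) F x = mexp Q a (\<lambda>ys. mexp Q b (\<lambda>zs. F (ys @ zs)) (last (x # ys))) x"
proof (induction a arbitrary: F x)
  case 0 then show ?case by simp
next
  case (Suc a)
  show ?case by (simp add: Suc.IH)
qed

lemma mpow_Suc_left: "mpow Q (Suc a) x y = (\<Sum>u\<in>UNIV. Q x u * mpow Q a u y)"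
proof (induction a arbitrary: y)
  case 0
  have "(\<Sum>u\<in>UNIV. Q x u * (if u = y then 1 else 0)) = (\<Sum>u\<in>UNIV. if u = y then Q x u else 0)"
    by (rule sum.cong) auto
  moreover have "(\<Sum>u\<in>UNIV. (if x = u then 1 else 0) * Q u y) = (\<Sum>u\<in>UNIV. if x = u then Q u y else 0)"
    by (rule sum.cong) auto
  ultimately show ?case by simp
next
  case (Suc a)
  have "mpow Q (Suc (Suc a)) x y = (\<Sum>v\<in>UNIV. (\<Sum>u\<in>UNIV. Q x u * mpow Q a u v) * Q v y)"
    using Suc by simp
  also have "\<dots> = (\<Sum>v\<in>UNIV. \<Sum>u\<in>UNIV. Q x u * mpow Q a u v * Q v y)"
    by (simp add: sum_distrib_right)
  also have "\<dots> = (\<Sum>u\<in>UNIV. \<Sum>v\<in>UNIV. Q x u * (mpow Q a u v * Q v y))"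
    by (subst sum.swap) (simp add: mult.assoc)
  also have "\<dots> = (\<Sum>u\<in>UNIV. Q x u * (\<Sum>v\<in>UNIV. mpow Q a u v * Q v y))"
    by (simp add: sum_distrib_left)
  finally show ?case by simp
qed

lemma mexp_last:
  "mexp Q a (\<lambda>ys. g (last (x # ys))) x = (\<Sum>y\<in>UNIV. mpow Q a x y * g y)"
proof (induction a arbitrary: x)
  case 0 then show ?case by (simp add: if_distrib[of "\<lambda>a. a * _"] cong: if_cong)
next
  case (Suc a)
  have "mexp Q (Suc a) (\<lambda>ys. g (last (x # ys))) x
     = (\<Sum>y\<in>UNIV. Q x y * mexp Q a (\<lambda>ys. g (last (y # ys))) y)"
    by simp
  also have "\<dots> = (\<Sum>y\<in>UNIV. Q x y * (\<Sum>v\<in>UNIV. mpow Q a y v * g v))"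
    using Suc by simp
  also have "\<dots> = (\<Sum>y\<in>UNIV. \<Sum>v\<in>UNIV. Q x y * mpow Q a y v * g v)"
    by (simp add: sum_distrib_left mult.assoc)
  also have "\<dots> = (\<Sum>v\<in>UNIV. \<Sum>y\<in>UNIV. Q x y * mpow Q a y v * g v)"
    by (rule sum.swap)
  also have "\<dots> = (\<Sum>v\<in>UNIV. mpow Q (Suc a) x v * g v)"
    unfolding mpow_Suc_left by (simp add: sum_distrib_right)
  finally show ?case .
qed

fun subs :: "nat \<Rightarrow> nat \<Rightarrow> 'a list \<Rightarrow> 'a list" where
  "subs K 0 ys = []"
| "subs K (Suc k) ys = ys ! (K - 1) # subs K k (drop K ys)"

lemma subs_nth: "l < k \<Longrightarrow> k * K \<le> length ys \<Longrightarrow> subs K k ys ! l = ys ! (l * K + (K - 1))"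
proof (induction k arbitrary: l ys)
  case 0 then show ?case by simp
next
  case (Suc k)
  note IH = Suc.IH and pr = Suc.prems
  show ?case
  proof (cases l)
    case 0 then show ?thesis by simp
  next
    case (Suc l')
    have "K \<le> length ys" using pr by auto
    then have "subs K (Suc k) ys ! l = drop K ys ! (l' * K + (K - 1))" using IH pr Suc by simp
    also have "\<dots> = ys ! (l * K + (K - 1))"
      using \<open>K \<le> length ys\<close> by (auto simp: Suc algebra_simps nth_drop)
    finally show ?thesis .
  qed
qed

lemma subs_length: "length (subs K k ys) = k"
  by (induction k arbitrary: ys) auto

lemma subs_append: "K \<ge> 1 \<Longrightarrow> length ys = K * k \<Longrightarrow> subs K k (ys @ zs) = subs K k ys"
proof (induction k arbitrary: ys)
  case 0 then show ?case by simp
next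
  case (Suc k)
  then have "K \<le> length ys" "length (drop K ys) = K * k" "K - 1 < length ys" by auto
  then show ?case using Suc by (simp add: nth_append)
qed

lemma mexp_subs:
  assumes "K \<ge> 1"
  shows "mexp Q (K * k) (\<lambda>ys. F (subs K k ys)) x = mexp (mpow Q K) k F x"
proof (induction k arbitrary: F x)
  case 0 then show ?case by simp
next
  case (Suc k)
  have "mexp Q (K * Suc k) (\<lambda>ys. F (subs K (Suc k) ys)) x
     = mexp Q K (\<lambda>ys. mexp Q (K * k) (\<lambda>zs. F (subs K (Suc k) (ys @ zs))) (last (x # ys))) x"
    using mexp_append[of Q K "K * k" "\<lambda>ys. F (subs K (Suc k) ys)" x] by simp
  also have "\<dots> = mexp Q K (\<lambda>ys. mexp Q (K * k) (\<lambda>zs. F (last (x # ys) # subs K k zs)) (last (x # ys))) x"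
  proof (rule mexp_cong)
    fix ys :: "'a list" assume l: "length ys = K"
    then have "ys \<noteq> []" using assms by auto
    then have "(ys @ zs) ! (K - 1) = last (x # ys)" for zs
      using l assms by (simp add: nth_append last_conv_nth)
    then show "mexp Q (K * k) (\<lambda>zs. F (subs K (Suc k) (ys @ zs))) (last (x # ys)) =
          mexp Q (K * k) (\<lambda>zs. F (last (x # ys) # subs K k zs)) (last (x # ys))"
      using l by simp
  qed
  also have "\<dots> = mexp Q K (\<lambda>ys. (\<lambda>u. mexp (mpow Q K) k (\<lambda>zs. F (u # zs)) u) (last (x # ys))) x"
  proof -
    have "mexp Q (K * k) (\<lambda>zs. F (u # subs K k zs)) u = mexp (mpow Q K) k (\<lambda>zs. F (u # zs)) u" for u
      using Suc.IH[of "\<lambda>zs. F (u # zs)" u] by simp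
    then show ?thesis by simp
  qed
  also have "\<dots> = mexp (mpow Q K) (Suc k) F x"
    by (subst mexp_last) simp
  finally show ?case .
qed


lemma tv_ge:
  fixes q p :: "'s::finite \<Rightarrow> real"
  assumes "\<And>y. 0 \<le> \<phi> y" "\<And>y. \<phi> y \<le> 1"
  shows "(\<Sum>y\<in>UNIV. (q y - p y) * \<phi> y) \<le> tv_dist q p"
proof -
  define A where "A = {y. p y < q y}"
  have "(\<Sum>y\<in>UNIV. (q y - p y) * \<phi> y) \<le> (\<Sum>y\<in>UNIV. if p y < q y then q y - p y else 0)"
  proof (rule sum_mono)
    fix y show "(q y - p y) * \<phi> y \<le> (if p y < q y then q y - p y else 0)"
      using assms[of y] by (auto simp: mult_le_0_iff intro: mult_left_le)
  qed
  also have "\<dots> = (\<Sum>y\<in>{y\<in>UNIV. p y < q y}. q y - p y)"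
    by (rule sum.inter_filter[symmetric]) simp
  also have "\<dots> = (\<Sum>y\<in>A. q y - p y)"
    unfolding A_def by simp
  also have "\<dots> = (\<Sum>y\<in>A. q y) - (\<Sum>y\<in>A. p y)" by (simp add: sum_subtractf)
  also have "\<dots> \<le> \<bar>(\<Sum>y\<in>A. q y) - (\<Sum>y\<in>A. p y)\<bar>" by simp
  also have "\<dots> \<le> tv_dist q p" unfolding tv_dist_def
    by (rule Max_ge) auto
  finally show ?thesis .
qed

lemma tv_nonneg: "0 \<le> tv_dist (q::'s::finite \<Rightarrow> real) p"
proof -
  have "\<bar>(\<Sum>y\<in>{}. q y) - (\<Sum>y\<in>{}. p y)\<bar> \<in> range (\<lambda>A. \<bar>(\<Sum>x\<in>A. q x) - (\<Sum>x\<in>A. p x)\<bar>)"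
    by (rule rangeI)
  then have "\<bar>(\<Sum>y\<in>{}. q y) - (\<Sum>y\<in>{}. p y)\<bar> \<le> tv_dist q p" unfolding tv_dist_def
    by (intro Max_ge) auto
  then show ?thesis by simp
qed

lemma iexp_mono:
  assumes "\<And>y. 0 \<le> p y" "\<And>ys. length ys = k \<Longrightarrow> F ys \<le> F' ys"
  shows "iexp p k F \<le> iexp p k F'"
  using assms(2)
proof (induction k arbitrary: F F')
  case 0 then show ?case by simp
next
  case (Suc k)
  show ?case unfolding iexp.simps
    by (intro sum_mono mult_left_mono Suc.IH Suc.prems assms(1)) auto
qed

lemma iexp_const:
  assumes "(\<Sum>y\<in>UNIV. p y) = 1"
  shows "iexp p k (\<lambda>_. c) = c"
proof (induction k)
  case 0 then show ?case by simp
next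
  case (Suc k)
  have "(\<Sum>y\<in>UNIV. p y * c) = c" using assms
    by (simp add: sum_distrib_right[symmetric])
  then show ?case using Suc by simp
qed

lemma iexp_cmult:
  "iexp p k (\<lambda>ys. c * F ys) = c * iexp p k F"
proof (induction k arbitrary: F)
  case 0 then show ?case by simp
next
  case (Suc k)
  show ?case by (simp add: Suc.IH sum_distrib_left algebra_simps)
qed

lemma iexp_01:
  assumes "\<And>y. 0 \<le> p y" "(\<Sum>y\<in>UNIV. p y) = 1" "\<And>ys. 0 \<le> F ys \<and> F ys \<le> 1"
  shows "0 \<le> iexp p k F \<and> iexp p k F \<le> 1"
proof
  have "iexp p k (\<lambda>_. 0) \<le> iexp p k F" by (rule iexp_mono) (use assms in auto)
  then show "0 \<le> iexp p k F" using iexp_const[OF assms(2)] by simp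
  have "iexp p k F \<le> iexp p k (\<lambda>_. 1)" by (rule iexp_mono) (use assms in auto)
  then show "iexp p k F \<le> 1" using iexp_const[OF assms(2)] by simp
qed

lemma coupling:
  assumes Q0: "\<And>x y. 0 \<le> Q x y" and Q1: "\<And>x. (\<Sum>y\<in>UNIV. Q x y) = 1"
    and p0: "\<And>y. 0 \<le> p y" and p1: "(\<Sum>y\<in>UNIV. p y) = 1"
    and tv: "\<And>x. tv_dist (Q x) p \<le> d"
    and F01: "\<And>ys. 0 \<le> F ys \<and> F ys \<le> 1"
  shows "mexp Q k F x \<le> iexp p k F + real k * d"
  using F01
proof (induction k arbitrary: F x)
  case 0 then show ?case by simp
next
  case (Suc k)
  define \<psi> where "\<psi> y = iexp p k (\<lambda>ys. F (y # ys))" for y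
  have psi: "0 \<le> \<psi> y \<and> \<psi> y \<le> 1" for y
    unfolding \<psi>_def by (rule iexp_01) (use p0 p1 Suc.prems in auto)
  have "mexp Q (Suc k) F x = (\<Sum>y\<in>UNIV. Q x y * mexp Q k (\<lambda>ys. F (y # ys)) y)" by simp
  also have "\<dots> \<le> (\<Sum>y\<in>UNIV. Q x y * (\<psi> y + real k * d))"
    unfolding \<psi>_def
    by (intro sum_mono mult_left_mono Suc.IH) (use Suc.prems Q0 in auto)
  also have "\<dots> = (\<Sum>y\<in>UNIV. Q x y * \<psi> y) + real k * d"
    using Q1[of x] by (simp add: distrib_left sum.distrib sum_distrib_right[symmetric])
  also have "(\<Sum>y\<in>UNIV. Q x y * \<psi> y) = (\<Sum>y\<in>UNIV. p y * \<psi> y) + (\<Sum>y\<in>UNIV. (Q x y - p y) * \<psi> y)"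
    by (simp add: sum.distrib[symmetric] algebra_simps)
  also have "(\<Sum>y\<in>UNIV. (Q x y - p y) * \<psi> y) \<le> d"
    using tv_ge[of \<psi> "Q x" p] psi tv[of x] by auto
  finally show ?case unfolding \<psi>_def by (simp add: algebra_simps)
qed

lemma cosh_le: "(exp (-x) + exp x) / 2 \<le> exp (x\<^sup>2 / 2)" if "x \<ge> 0" for x :: real
proof -
  have "- (2*x) * (1/2) + ln (1 + (1/2) * (exp (2*x) - 1)) \<le> (2*x)\<^sup>2 / 8"
    using Hoeffdings_lemma_aux[of "2*x" "1/2"] that by simp
  then have "ln ((1 + exp (2*x)) / 2) \<le> x + x\<^sup>2 / 2"
    by (simp add: power2_eq_square field_simps)
  then have "(1 + exp (2*x)) / 2 \<le> exp (x + x\<^sup>2 / 2)"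
    by (metis add_pos_nonneg divide_pos_pos exp_gt_zero exp_le_cancel_iff exp_ln
          less_eq_real_def zero_less_numeral zero_less_one)
  then have "(1 + exp (2*x)) / 2 * exp (-x) \<le> exp (x + x\<^sup>2 / 2) * exp (-x)"
    by (intro mult_right_mono) auto
  moreover have "(1 + exp (2*x)) / 2 * exp (-x) = (exp (-x) + exp x) / 2"
    by (simp add: field_simps flip: exp_add)
  moreover have "exp (x + x\<^sup>2 / 2) * exp (-x) = exp (x\<^sup>2 / 2)"
    by (simp flip: exp_add)
  ultimately show ?thesis by simp
qed

lemma hoeffding_finite:
  fixes Y p :: "'s::finite \<Rightarrow> real"
  assumes p0: "\<And>y. 0 \<le> p y" and p1: "(\<Sum>y\<in>UNIV. p y) = 1"
    and m0: "(\<Sum>y\<in>UNIV. p y * Y y) = 0" and bd: "\<And>y. \<bar>Y y\<bar> \<le> c"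
    and l: "l \<ge> 0"
  shows "(\<Sum>y\<in>UNIV. p y * exp (l * Y y)) \<le> exp (l\<^sup>2 * c\<^sup>2 / 2)"
proof (cases "c = 0")
  case True
  then have "Y y = 0" for y using bd[of y] by simp
  then show ?thesis using p1 True by simp
next
  case False
  then have c: "c > 0" using bd[of undefined] by auto
  have cv: "exp (l * Y y) \<le> ((c - Y y) / (2*c)) * exp (l * (-c)) + ((c + Y y) / (2*c)) * exp (l * c)" for y
  proof -
    define t where "t = (c + Y y) / (2*c)"
    have t: "0 \<le> t" "t \<le> 1" using bd[of y] c by (auto simp: t_def field_simps abs_le_iff)
    have "exp (l * ((1 - t) *\<^sub>R (-c) + t *\<^sub>R c)) \<le> (1 - t) * exp (l * (-c)) + t * exp (l * c)"
      using convex_onD[OF convex_on_exp[OF l], of t "-c" c] t by simp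
    moreover have "(1 - t) *\<^sub>R (-c) + t *\<^sub>R c = Y y" using c by (simp add: t_def field_simps)
    moreover have "1 - t = (c - Y y) / (2*c)" using c by (simp add: t_def field_simps)
    ultimately show ?thesis by (simp add: t_def)
  qed
  have "(\<Sum>y\<in>UNIV. p y * exp (l * Y y))
     \<le> (\<Sum>y\<in>UNIV. p y * (((c - Y y) / (2*c)) * exp (l * (-c)) + ((c + Y y) / (2*c)) * exp (l * c)))"
    by (intro sum_mono mult_left_mono cv p0)
  also have "\<dots> = (\<Sum>y\<in>UNIV. p y * ((exp (-(l*c)) + exp (l*c)) / 2)
        + (p y * Y y) * ((exp (l*c) - exp (-(l*c))) / (2*c)))"
    using c by (intro sum.cong refl) (simp add: field_simps)
  also have "\<dots> = (\<Sum>y\<in>UNIV. p y) * ((exp (-(l*c)) + exp (l*c)) / 2)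
        + (\<Sum>y\<in>UNIV. p y * Y y) * ((exp (l*c) - exp (-(l*c))) / (2*c))"
    by (simp only: sum.distrib sum_distrib_right)
  also have "\<dots> = (exp (-(l*c)) + exp (l*c)) / 2"
    using p1 m0 by simp
  also have "\<dots> \<le> exp ((l*c)\<^sup>2 / 2)" using cosh_le[of "l*c"] c l by simp
  finally show ?thesis by (simp add: power_mult_distrib)
qed


definition uu :: "real \<Rightarrow> 'v::real_inner \<Rightarrow> real" where
  "uu A s = sqrt ((norm s)\<^sup>2 + A)"

lemma uu_ge: "A > 0 \<Longrightarrow> sqrt A \<le> uu A s" "A > 0 \<Longrightarrow> norm s \<le> uu A s" "A > 0 \<Longrightarrow> 0 < uu A s"
proof -
  assume A: "A > 0"
  have p: "0 < (norm s)\<^sup>2 + A" using A by (simp add: add_nonneg_pos)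
  have p': "0 \<le> (norm s)\<^sup>2 + A" using p by simp
  show "sqrt A \<le> uu A s" unfolding uu_def using p' by simp
  have "(norm s)\<^sup>2 \<le> (norm s)\<^sup>2 + A" using A by simp
  then show "norm s \<le> uu A s" unfolding uu_def using real_le_rsqrt by blast
  show "0 < uu A s" unfolding uu_def using p by simp
qed

lemma uu_step:
  fixes s h :: "'v::real_inner"
  assumes A: "A > 0" and hc: "norm h \<le> c"
  shows "uu A (s + h) \<le> uu A s + inner s h / uu A s + c\<^sup>2 / (2 * sqrt A)"
proof -
  define a where "a = uu A s"
  define b where "b = 2 * inner s h + (norm h)\<^sup>2"
  have a0: "a > 0" "sqrt A \<le> a" using uu_ge[OF A] by (auto simp: a_def)
  have "0 < (norm s)\<^sup>2 + A" using A by (simp add: add_nonneg_pos)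
  then have a2: "a\<^sup>2 = (norm s)\<^sup>2 + A" unfolding a_def uu_def by simp
  have n2: "(norm (s + h))\<^sup>2 = (norm s)\<^sup>2 + 2 * inner s h + (norm h)\<^sup>2"
    by (simp add: power2_norm_eq_inner inner_add_left inner_add_right inner_commute)
  have "uu A (s + h) = sqrt (a\<^sup>2 + b)" unfolding uu_def a2 b_def n2 by (simp add: algebra_simps)
  also have "\<dots> \<le> a + b / (2 * a)"
  proof (rule real_le_lsqrt)
    have "2 * a\<^sup>2 + b = (norm s)\<^sup>2 + 2 * A + (norm (s + h))\<^sup>2"
      unfolding a2 b_def n2 by simp
    also have "\<dots> \<ge> 0" using A by simp
    finally have "0 \<le> (2 * a\<^sup>2 + b) / (2 * a)" using a0 by simp
    also have "(2 * a\<^sup>2 + b) / (2 * a) = a + b / (2 * a)" using a0 by (simp add: field_simps power2_eq_square)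
    finally show "0 \<le> a + b / (2 * a)" .
    have "(a + b / (2 * a))\<^sup>2 = a\<^sup>2 + b + (b / (2 * a))\<^sup>2" using a0
      by (simp add: power2_eq_square field_simps)
    then show "a\<^sup>2 + b \<le> (a + b / (2 * a))\<^sup>2" by simp
  qed
  also have "b / (2 * a) = inner s h / a + (norm h)\<^sup>2 / (2 * a)"
    using a0 unfolding b_def by (simp add: field_simps)
  also have "(norm h)\<^sup>2 / (2 * a) \<le> c\<^sup>2 / (2 * sqrt A)"
  proof -
    have "(norm h)\<^sup>2 \<le> c\<^sup>2" using hc by (intro power_mono) auto
    moreover have "sqrt A > 0" using A by simp
    ultimately show ?thesis using a0
      by (intro frac_le) auto
  qed
  finally show ?thesis unfolding a_def by simp
qed

lemma one_step:
  fixes h :: "'s::finite \<Rightarrow> 'v::real_inner"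
  assumes p0: "\<And>y. 0 \<le> p y" and p1: "(\<Sum>y\<in>UNIV. p y) = 1"
    and m0: "(\<Sum>y\<in>UNIV. p y *\<^sub>R h y) = 0" and hc: "\<And>y. norm (h y) \<le> c"
    and A: "A > 0" and l: "l \<ge> 0"
  shows "(\<Sum>y\<in>UNIV. p y * exp (l * uu A (s + h y)))
     \<le> exp (l * uu A s) * exp (l * c\<^sup>2 / (2 * sqrt A) + l\<^sup>2 * c\<^sup>2 / 2)"
proof -
  define a where "a = uu A s"
  have a0: "a > 0" "norm s \<le> a" using uu_ge[OF A] by (auto simp: a_def)
  define Y where "Y y = inner s (h y) / a" for y
  have Yb: "\<bar>Y y\<bar> \<le> c" for y
  proof -
    have "\<bar>inner s (h y)\<bar> \<le> norm s * norm (h y)" by (rule Cauchy_Schwarz_ineq2)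
    also have "\<dots> \<le> a * c" using a0 hc[of y] by (intro mult_mono) auto
    finally show ?thesis using a0 unfolding Y_def by (simp add: field_simps abs_div)
  qed
  have Ym: "(\<Sum>y\<in>UNIV. p y * Y y) = 0"
  proof -
    have "(\<Sum>y\<in>UNIV. p y * Y y) = inner s (\<Sum>y\<in>UNIV. p y *\<^sub>R h y) / a"
      unfolding Y_def by (simp add: inner_sum_right sum_divide_distrib)
    then show ?thesis using m0 by simp
  qed
  have "(\<Sum>y\<in>UNIV. p y * exp (l * uu A (s + h y)))
     \<le> (\<Sum>y\<in>UNIV. p y * (exp (l * (a + c\<^sup>2 / (2 * sqrt A))) * exp (l * Y y)))"
  proof (intro sum_mono mult_left_mono p0)
    fix y
    have "uu A (s + h y) \<le> a + Y y + c\<^sup>2 / (2 * sqrt A)"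
      using uu_step[OF A hc[of y], of s] unfolding a_def Y_def by simp
    from mult_left_mono[OF this l]
    have "l * uu A (s + h y) \<le> l * (a + c\<^sup>2 / (2 * sqrt A)) + l * Y y"
      by (simp add: algebra_simps)
    then show "exp (l * uu A (s + h y)) \<le> exp (l * (a + c\<^sup>2 / (2 * sqrt A))) * exp (l * Y y)"
      by (simp flip: exp_add)
  qed
  also have "\<dots> = exp (l * (a + c\<^sup>2 / (2 * sqrt A))) * (\<Sum>y\<in>UNIV. p y * exp (l * Y y))"
    unfolding sum_distrib_left by (intro sum.cong refl) (simp only: mult_ac)
  also have "\<dots> \<le> exp (l * (a + c\<^sup>2 / (2 * sqrt A))) * exp (l\<^sup>2 * c\<^sup>2 / 2)"
    by (intro mult_left_mono hoeffding_finite[OF p0 p1 Ym Yb l]) auto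
  also have "\<dots> = exp (l * a) * exp (l * c\<^sup>2 / (2 * sqrt A) + l\<^sup>2 * c\<^sup>2 / 2)"
    by (simp add: algebra_simps flip: exp_add)
  finally show ?thesis unfolding a_def .
qed

lemma iexp_expmom:
  fixes h :: "'s::finite \<Rightarrow> 'v::real_inner"
  assumes p0: "\<And>y. 0 \<le> p y" and p1: "(\<Sum>y\<in>UNIV. p y) = 1"
    and m0: "(\<Sum>y\<in>UNIV. p y *\<^sub>R h y) = 0" and hc: "\<And>y. norm (h y) \<le> c"
    and A: "A > 0" and l: "l \<ge> 0"
  shows "iexp p k (\<lambda>xs. exp (l * uu A (s + sum_list (map h xs))))
     \<le> exp (l * uu A s) * exp (real k * (l * c\<^sup>2 / (2 * sqrt A) + l\<^sup>2 * c\<^sup>2 / 2))"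
proof (induction k arbitrary: s)
  case 0 then show ?case by simp
next
  case (Suc k)
  define E where "E = l * c\<^sup>2 / (2 * sqrt A) + l\<^sup>2 * c\<^sup>2 / 2"
  have "iexp p (Suc k) (\<lambda>xs. exp (l * uu A (s + sum_list (map h xs))))
      = (\<Sum>y\<in>UNIV. p y * iexp p k (\<lambda>xs. exp (l * uu A ((s + h y) + sum_list (map h xs)))))"
    by (simp add: add.assoc)
  also have "\<dots> \<le> (\<Sum>y\<in>UNIV. p y * (exp (l * uu A (s + h y)) * exp (real k * E)))"
    unfolding E_def by (intro sum_mono mult_left_mono p0 Suc.IH)
  also have "\<dots> = (\<Sum>y\<in>UNIV. p y * exp (l * uu A (s + h y))) * exp (real k * E)"
    by (simp add: sum_distrib_right mult.assoc)
  also have "\<dots> \<le> (exp (l * uu A s) * exp E) * exp (real k * E)"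
    unfolding E_def by (intro mult_right_mono one_step[OF p0 p1 m0 hc A l]) auto
  also have "\<dots> = exp (l * uu A s) * exp (real (Suc k) * E)"
    by (simp add: algebra_simps flip: exp_add)
  finally show ?case unfolding E_def .
qed

lemma iexp_tail:
  fixes h :: "'s::finite \<Rightarrow> 'v::real_inner"
  assumes p0: "\<And>y. 0 \<le> p y" and p1: "(\<Sum>y\<in>UNIV. p y) = 1"
    and m0: "(\<Sum>y\<in>UNIV. p y *\<^sub>R h y) = 0" and hc: "\<And>y. norm (h y) \<le> c"
    and A: "A > 0" and l: "l \<ge> 0"
  shows "iexp p k (\<lambda>xs. if \<rho> < norm (sum_list (map h xs)) then 1 else 0)
     \<le> exp (- l * \<rho> + l * sqrt A + real k * (l * c\<^sup>2 / (2 * sqrt A) + l\<^sup>2 * c\<^sup>2 / 2))"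
proof -
  have "iexp p k (\<lambda>xs. if \<rho> < norm (sum_list (map h xs)) then 1 else 0)
     \<le> iexp p k (\<lambda>xs. exp (- l * \<rho>) * exp (l * uu A (0 + sum_list (map h xs))))"
  proof (rule iexp_mono[OF p0])
    fix xs :: "'s list"
    show "(if \<rho> < norm (sum_list (map h xs)) then 1 else 0) \<le> exp (- l * \<rho>) * exp (l * uu A (0 + sum_list (map h xs)))"
    proof (cases "\<rho> < norm (sum_list (map h xs))")
      case True
      then have "\<rho> \<le> uu A (sum_list (map h xs))" using uu_ge(2)[OF A, of "sum_list (map h xs)"] by simp
      then have "l * \<rho> \<le> l * uu A (sum_list (map h xs))" using l
        by (rule mult_left_mono)
      then have "0 \<le> - l * \<rho> + l * uu A (sum_list (map h xs))" by simp
      then have "1 \<le> exp (- l * \<rho> + l * uu A (sum_list (map h xs)))" by simp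
      then show ?thesis using True by (simp flip: exp_add)
    qed simp
  qed
  also have "\<dots> = exp (- l * \<rho>) * iexp p k (\<lambda>xs. exp (l * uu A (0 + sum_list (map h xs))))"
    by (rule iexp_cmult)
  also have "\<dots> \<le> exp (- l * \<rho>) * (exp (l * uu A (0::'v)) * exp (real k * (l * c\<^sup>2 / (2 * sqrt A) + l\<^sup>2 * c\<^sup>2 / 2)))"
  proof -
    have X: "iexp p k (\<lambda>xs. exp (l * uu A (0 + sum_list (map h xs))))
      \<le> exp (l * uu A (0::'v)) * exp (real k * (l * c\<^sup>2 / (2 * sqrt A) + l\<^sup>2 * c\<^sup>2 / 2))"
      using iexp_expmom[OF p0 p1 m0 hc A l, of k 0] by simp
    show ?thesis by (rule mult_left_mono[OF X]) simp
  qed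
  also have "uu A (0::'v) = sqrt A" unfolding uu_def by simp
  also have "exp (- l * \<rho>) * (exp (l * sqrt A) * exp (real k * (l * c\<^sup>2 / (2 * sqrt A) + l\<^sup>2 * c\<^sup>2 / 2)))
     = exp (- l * \<rho> + l * sqrt A + real k * (l * c\<^sup>2 / (2 * sqrt A) + l\<^sup>2 * c\<^sup>2 / 2))"
    by (simp only: exp_add mult.assoc)
  finally show ?thesis .
qed

lemma iexp_conc:
  fixes h :: "'s::finite \<Rightarrow> 'v::real_inner"
  assumes p0: "\<And>y. 0 \<le> p y" and p1: "(\<Sum>y\<in>UNIV. p y) = 1"
    and m0: "(\<Sum>y\<in>UNIV. p y *\<^sub>R h y) = 0" and hc: "\<And>y. norm (h y) \<le> c"
    and c: "c > 0" and \<tau>: "\<tau> \<ge> 0" and \<rho>: "3/2 * c * sqrt (real k + 1) + \<tau> \<le> \<rho>"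
  shows "iexp p k (\<lambda>xs. if \<rho> < norm (sum_list (map h xs)) then 1 else 0)
     \<le> exp (- \<tau>\<^sup>2 / (2 * ((real k + 1) * c\<^sup>2)))"
proof -
  define T where "T = (real k + 1) * c\<^sup>2"
  define l where "l = \<tau> / T"
  define r where "r = sqrt (real k + 1)"
  have T: "T > 0" unfolding T_def using c by simp
  have l: "l \<ge> 0" unfolding l_def using T \<tau> by simp
  have r: "r > 0" "r\<^sup>2 = real k + 1" unfolding r_def by auto
  have sA: "sqrt T = c * r" unfolding T_def r_def using c by (simp add: real_sqrt_mult)
  have "iexp p k (\<lambda>xs. if \<rho> < norm (sum_list (map h xs)) then 1 else 0)
     \<le> exp (- l * \<rho> + l * sqrt T + real k * (l * c\<^sup>2 / (2 * sqrt T) + l\<^sup>2 * c\<^sup>2 / 2))"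
    by (rule iexp_tail[OF p0 p1 m0 hc T l])
  also have "- l * \<rho> + l * sqrt T + real k * (l * c\<^sup>2 / (2 * sqrt T) + l\<^sup>2 * c\<^sup>2 / 2)
      \<le> - \<tau>\<^sup>2 / (2 * T)"
  proof -
    have k1: "real k * (c / (2 * r)) \<le> c * r / 2"
    proof -
      have "real k \<le> r\<^sup>2" using r by simp
      then have "real k * (c / (2 * r)) \<le> r\<^sup>2 * (c / (2 * r))"
        using c r by (intro mult_right_mono) auto
      also have "\<dots> = c * r / 2" using r(1) by (simp add: power2_eq_square field_simps)
      finally show ?thesis .
    qed
    have "real k * (l * c\<^sup>2 / (2 * sqrt T)) = l * (real k * (c / (2 * r)))"
      unfolding sA using c r by (simp add: power2_eq_square field_simps)
    also have "\<dots> \<le> l * (c * r / 2)" using k1 l by (rule mult_left_mono)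
    finally have e1: "real k * (l * c\<^sup>2 / (2 * sqrt T)) \<le> l * (c * r / 2)" .
    have e2: "real k * (l\<^sup>2 * c\<^sup>2 / 2) \<le> T * l\<^sup>2 / 2"
      unfolding T_def using c by (simp add: field_simps)
    have e3: "- l * \<rho> \<le> - l * (3/2 * c * r + \<tau>)"
      using \<rho> l unfolding r_def by (simp add: mult_left_mono)
    have "- l * \<rho> + l * sqrt T + real k * (l * c\<^sup>2 / (2 * sqrt T) + l\<^sup>2 * c\<^sup>2 / 2)
        \<le> - l * (3/2 * c * r + \<tau>) + l * (c * r) + l * (c * r / 2) + T * l\<^sup>2 / 2"
    proof -
      have e0: "l * sqrt T = l * (c * r)" using sA by simp
      have "real k * (l * c\<^sup>2 / (2 * sqrt T) + l\<^sup>2 * c\<^sup>2 / 2) = real k * (l * c\<^sup>2 / (2 * sqrt T)) + real k * (l\<^sup>2 * c\<^sup>2 / 2)"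
        by (rule distrib_left)
      then show ?thesis using e0 e1 e2 e3 by linarith
    qed
    also have "\<dots> = - \<tau>\<^sup>2 / (2 * T)" unfolding l_def using T
      by (simp add: field_simps power2_eq_square)
    finally show ?thesis .
  qed
  finally show ?thesis unfolding T_def by simp
qed


lemma mpow_stoch:
  assumes "stochastic P"
  shows "0 \<le> mpow P k x y" "(\<Sum>y\<in>UNIV. mpow P k x y) = 1"
proof -
  have "(\<forall>y. 0 \<le> mpow P k x y) \<and> (\<Sum>y\<in>UNIV. mpow P k x y) = 1"
  proof (induction k)
    case 0
    have "(\<Sum>y\<in>UNIV. (if x = y then 1 else 0::real)) = 1" by simp
    then show ?case by simp
  next
    case (Suc k)
    have nn: "0 \<le> mpow P (Suc k) x y" for y
      using Suc assms unfolding stochastic_def by (simp add: sum_nonneg)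
    have "(\<Sum>y\<in>UNIV. mpow P (Suc k) x y) = (\<Sum>u\<in>UNIV. mpow P k x u * (\<Sum>y\<in>UNIV. P u y))"
      by (simp add: sum_distrib_left) (rule sum.swap)
    also have "\<dots> = 1" using Suc assms unfolding stochastic_def by simp
    finally show ?case using nn by simp
  qed
  then show "0 \<le> mpow P k x y" "(\<Sum>y\<in>UNIV. mpow P k x y) = 1" by auto
qed

lemma mpow_stochastic: "stochastic P \<Longrightarrow> stochastic (mpow P k)"
  using mpow_stoch unfolding stochastic_def by blast

lemma tv_le_dmix: "tv_dist (mpow P K x) mu \<le> d_mix P mu K"
  unfolding d_mix_def by (rule Max_ge) auto

lemma dmix_nonneg: "0 \<le> d_mix P mu K"
  using tv_le_dmix[of P K undefined mu] tv_nonneg[of "mpow P K undefined" mu] by linarith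

lemma mexp_window:
  assumes P: "stochastic P" and K: "K \<ge> 1" and len: "D + K * n \<le> L"
    and bd: "\<And>u. mexp (mpow P K) n \<phi> u \<le> \<beta>"
  shows "mexp P L (\<lambda>ys. \<phi> (subs K n (drop D ys))) x \<le> \<beta>"
proof -
  define R where "R = L - D - K * n"
  have L: "L = D + (K * n + R)" using len unfolding R_def by simp
  have P0: "\<And>x y. 0 \<le> P x y" using P unfolding stochastic_def by auto
  have inner: "mexp P (K * n + R) (\<lambda>zs. \<phi> (subs K n zs)) u = mexp (mpow P K) n \<phi> u" for u
  proof -
    have "mexp P (K * n + R) (\<lambda>zs. \<phi> (subs K n zs)) u
        = mexp P (K * n) (\<lambda>zs. mexp P R (\<lambda>ws. \<phi> (subs K n (zs @ ws))) (last (u # zs))) u"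
      by (rule mexp_append)
    also have "\<dots> = mexp P (K * n) (\<lambda>zs. \<phi> (subs K n zs)) u"
    proof (rule mexp_cong)
      fix zs :: "'a list" assume "length zs = K * n"
      then have "subs K n (zs @ ws) = subs K n zs" for ws using subs_append K by blast
      then show "mexp P R (\<lambda>ws. \<phi> (subs K n (zs @ ws))) (last (u # zs)) = \<phi> (subs K n zs)"
        using mexp_const[OF P] by simp
    qed
    also have "\<dots> = mexp (mpow P K) n \<phi> u" by (rule mexp_subs[OF K])
    finally show ?thesis .
  qed
  have "mexp P L (\<lambda>ys. \<phi> (subs K n (drop D ys))) x
      = mexp P D (\<lambda>ys. mexp P (K * n + R) (\<lambda>zs. \<phi> (subs K n (drop D (ys @ zs)))) (last (x # ys))) x"
    unfolding L by (rule mexp_append)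
  also have "\<dots> = mexp P D (\<lambda>ys. mexp (mpow P K) n \<phi> (last (x # ys))) x"
  proof (rule mexp_cong)
    fix ys :: "'a list" assume "length ys = D"
    then show "mexp P (K * n + R) (\<lambda>zs. \<phi> (subs K n (drop D (ys @ zs)))) (last (x # ys)) =
       mexp (mpow P K) n \<phi> (last (x # ys))" using inner by simp
  qed
  also have "\<dots> \<le> mexp P D (\<lambda>_. \<beta>) x"
    by (rule mexp_mono[OF P0 bd])
  also have "\<dots> = \<beta>" by (rule mexp_const[OF P])
  finally show ?thesis .
qed

lemma iid_bound:
  fixes h :: "'s::finite \<Rightarrow> 'v::real_inner"
  assumes p0: "\<And>y. 0 \<le> p y" and p1: "(\<Sum>y\<in>UNIV. p y) = 1"
    and m0: "(\<Sum>y\<in>UNIV. p y *\<^sub>R h y) = 0" and hc: "\<And>y. norm (h y) \<le> 2 * G"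
    and G: "G \<ge> 0" and n: "n \<ge> 1" and dp: "\<delta>' > 0" and K: "K \<ge> 1"
  shows "iexp p (n - 1) (\<lambda>xs. if 6 * G * sqrt (real n) * (1 + sqrt (ln (real K / \<delta>'))) - 2 * G
            < norm (sum_list (map h xs)) then 1 else 0) \<le> \<delta>' / real K"
proof -
  define \<rho> where "\<rho> = 6 * G * sqrt (real n) * (1 + sqrt (ln (real K / \<delta>'))) - 2 * G"
  define F where "F = (\<lambda>xs. if \<rho> < norm (sum_list (map h xs)) then 1 else (0::real))"
  have F01: "\<And>xs. 0 \<le> F xs \<and> F xs \<le> 1" unfolding F_def by auto
  have main: "iexp p (n - 1) F \<le> \<delta>' / real K"
  proof (cases "\<delta>' / real K \<ge> 1")
    case True
    moreover have "iexp p (n - 1) F \<le> 1" using iexp_01[OF p0 p1, of F] F01 by blast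
    ultimately show ?thesis by linarith
  next
    case False
    then have Kd: "real K / \<delta>' > 1" using dp K by (simp add: field_simps)
    define Lg where "Lg = ln (real K / \<delta>')"
    have Lg: "Lg > 0" unfolding Lg_def using Kd by simp
    have eL: "exp (- Lg) = \<delta>' / real K" unfolding Lg_def using Kd dp K
      by (simp add: exp_minus field_simps)
    show ?thesis
    proof (cases "G = 0")
      case True
      then have "h y = 0" for y using hc[of y] by simp
      then have "F xs = 0" for xs unfolding F_def \<rho>_def using True
        by (induction xs) auto
      then have "iexp p (n - 1) F = iexp p (n - 1) (\<lambda>_. 0)" by presburger
      then show ?thesis using iexp_const[OF p1] dp K by simp
    next
      case False
      then have Gp: "G > 0" using G by simp
      define k where "k = n - 1"
      have kn: "real k + 1 = real n" unfolding k_def using n by simp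
      define c where "c = 2 * G"
      define \<tau> where "\<tau> = 2 * G * sqrt (2 * real n * Lg)"
      have c: "c > 0" unfolding c_def using Gp by simp
      have tau: "\<tau> \<ge> 0" unfolding \<tau>_def using Gp Lg by simp
      have sn: "sqrt (real n) \<ge> 1" using n by simp
      have cond: "3/2 * c * sqrt (real k + 1) + \<tau> \<le> \<rho>"
      proof -
        have s2: "sqrt 2 \<le> 3/2"
          by (rule real_le_lsqrt) (auto simp: power2_eq_square)
        have "\<tau> = 2 * G * (sqrt 2 * sqrt (real n) * sqrt Lg)"
          unfolding \<tau>_def by (simp add: real_sqrt_mult)
        also have "\<dots> \<le> 2 * G * (3/2 * sqrt (real n) * sqrt Lg)"
          using s2 Gp Lg by (intro mult_left_mono mult_right_mono) auto
        finally have t1: "\<tau> \<le> 3 * G * sqrt (real n) * sqrt Lg" by (simp add: mult_ac)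
        have t2: "3 * G * sqrt (real n) * sqrt Lg \<le> 6 * G * sqrt (real n) * sqrt Lg"
          using Gp Lg by simp
        have a3: "2 \<le> 3 * sqrt (real n)" using sn by linarith
        have t3: "2 * G \<le> 3 * G * sqrt (real n)" using mult_right_mono[OF a3, of G] Gp by (simp add: mult_ac)
        show ?thesis unfolding kn c_def \<rho>_def Lg_def[symmetric] using t1 t2 t3
          by (simp add: algebra_simps)
      qed
      have hc': "norm (h y) \<le> c" for y using hc[of y] unfolding c_def .
      have "iexp p k F \<le> exp (- \<tau>\<^sup>2 / (2 * ((real k + 1) * c\<^sup>2)))"
        unfolding F_def by (rule iexp_conc[OF p0 p1 m0 hc' c tau cond])
      also have "- \<tau>\<^sup>2 / (2 * ((real k + 1) * c\<^sup>2)) = - Lg"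
        unfolding kn \<tau>_def c_def using Gp Lg n
        by (simp add: power2_eq_square field_simps real_sqrt_mult)
      finally show ?thesis unfolding k_def eL .
    qed
  qed
  then show ?thesis unfolding F_def \<rho>_def .
qed


lemma sub_bound:
  fixes h :: "'s::finite \<Rightarrow> 'v::real_inner"
  assumes Q0: "\<And>x y. 0 \<le> Q x y" and Q1: "\<And>x. (\<Sum>y\<in>UNIV. Q x y) = 1"
    and p0: "\<And>y. 0 \<le> p y" and p1: "(\<Sum>y\<in>UNIV. p y) = 1"
    and tv: "\<And>x. tv_dist (Q x) p \<le> d"
    and m0: "(\<Sum>y\<in>UNIV. p y *\<^sub>R h y) = 0" and hc: "\<And>y. norm (h y) \<le> 2 * G"
    and G: "G \<ge> 0" and n: "n \<ge> 1" and dp: "\<delta>' > 0" and K: "K \<ge> 1"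
  shows "mexp Q n (\<lambda>xs. if 6 * G * sqrt (real n) * (1 + sqrt (ln (real K / \<delta>')))
            < norm (sum_list (map h xs)) then 1 else 0) u \<le> real (n - 1) * d + \<delta>' / real K"
proof -
  define r where "r = 6 * G * sqrt (real n) * (1 + sqrt (ln (real K / \<delta>')))"
  define \<phi> where "\<phi> = (\<lambda>xs. if r < norm (sum_list (map h xs)) then 1 else (0::real))"
  define \<psi> where "\<psi> = (\<lambda>xs. if r - 2 * G < norm (sum_list (map h xs)) then 1 else (0::real))"
  obtain k where k: "n = Suc k" using n by (cases n) auto
  have ib: "iexp p k \<psi> \<le> \<delta>' / real K"
    using iid_bound[OF p0 p1 m0 hc G n dp K] unfolding \<psi>_def r_def k by simp
  have step: "mexp Q k (\<lambda>xs. \<phi> (x # xs)) x \<le> \<delta>' / real K + real k * d" for x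
  proof -
    have "mexp Q k (\<lambda>xs. \<phi> (x # xs)) x \<le> iexp p k (\<lambda>xs. \<phi> (x # xs)) + real k * d"
      by (rule coupling[OF Q0 Q1 p0 p1 tv]) (auto simp: \<phi>_def)
    also have "iexp p k (\<lambda>xs. \<phi> (x # xs)) \<le> iexp p k \<psi>"
    proof (rule iexp_mono[OF p0])
      fix xs :: "'s list"
      have "norm (h x + sum_list (map h xs)) \<le> norm (h x) + norm (sum_list (map h xs))"
        by (rule norm_triangle_ineq)
      then have "norm (h x + sum_list (map h xs)) \<le> 2 * G + norm (sum_list (map h xs))"
        using hc[of x] by linarith
      then show "\<phi> (x # xs) \<le> \<psi> xs" unfolding \<phi>_def \<psi>_def by auto
    qed
    finally show ?thesis using ib by linarith
  qed
  have "mexp Q n \<phi> u = (\<Sum>x\<in>UNIV. Q u x * mexp Q k (\<lambda>xs. \<phi> (x # xs)) x)" unfolding k by simp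
  also have "\<dots> \<le> (\<Sum>x\<in>UNIV. Q u x * (\<delta>' / real K + real k * d))"
    by (intro sum_mono mult_left_mono step Q0)
  also have "\<dots> = \<delta>' / real K + real k * d" using Q1[of u] by (simp add: sum_distrib_right[symmetric])
  finally show ?thesis unfolding \<phi>_def r_def k by simp
qed

lemma det:
  fixes b :: "nat \<Rightarrow> 'v::real_normed_vector"
  assumes K: "K \<ge> 1" and bG: "\<And>i. norm (b i) \<le> 2 * G"
    and Sj: "\<And>j. j < K \<Longrightarrow> norm (\<Sum>l<m div K. b (l * K + j)) \<le> r"
  shows "norm (\<Sum>i<m. b i) \<le> real K * r + real (m - m div K * K) * (2 * G)"
proof -
  define n where "n = m div K"
  have nK: "n * K \<le> m" unfolding n_def by simp
  have "(\<Sum>i<m. b i) = (\<Sum>i\<in>{0..<n*K}. b i) + (\<Sum>i\<in>{n*K..<m}. b i)"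
    using sum.atLeastLessThan_concat[of 0 "n*K" m b] nK by (simp add: atLeast0LessThan)
  also have "(\<Sum>i\<in>{0..<n*K}. b i) = (\<Sum>j<K. \<Sum>l<n. b (l * K + j))"
  proof -
    have "(\<Sum>i\<in>{0..<n*K}. b i) = (\<Sum>l<n. sum b {l * K..<l * K + K})"
      by (simp add: sum.nat_group atLeast0LessThan)
    also have "\<dots> = (\<Sum>l<n. \<Sum>j<K. b (l * K + j))"
    proof (rule sum.cong[OF refl])
      fix l
      have "sum b {0 + l * K..<K + l * K} = (\<Sum>j\<in>{0..<K}. b (j + l * K))"
        by (rule sum.shift_bounds_nat_ivl)
      then show "sum b {l * K..<l * K + K} = (\<Sum>j<K. b (l * K + j))"
        by (simp add: atLeast0LessThan add.commute)
    qed
    also have "\<dots> = (\<Sum>j<K. \<Sum>l<n. b (l * K + j))" by (rule sum.swap)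
    finally show ?thesis .
  qed
  finally have eq: "(\<Sum>i<m. b i) = (\<Sum>j<K. \<Sum>l<n. b (l * K + j)) + (\<Sum>i\<in>{n*K..<m}. b i)" .
  have "norm (\<Sum>i<m. b i) \<le> norm (\<Sum>j<K. \<Sum>l<n. b (l * K + j)) + norm (\<Sum>i\<in>{n*K..<m}. b i)"
    unfolding eq by (rule norm_triangle_ineq)
  also have "norm (\<Sum>j<K. \<Sum>l<n. b (l * K + j)) \<le> (\<Sum>j<K. norm (\<Sum>l<n. b (l * K + j)))"
    by (rule norm_sum)
  also have "\<dots> \<le> (\<Sum>j<K. r)" by (intro sum_mono) (use Sj n_def in auto)
  also have "norm (\<Sum>i\<in>{n*K..<m}. b i) \<le> (\<Sum>i\<in>{n*K..<m}. norm (b i))" by (rule norm_sum)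
  also have "\<dots> \<le> (\<Sum>i\<in>{n*K..<m}. 2 * G)" by (intro sum_mono bG)
  finally show ?thesis unfolding n_def by simp
qed


lemma sum_list_map_nth: "sum_list (map h xs) = (\<Sum>l<length xs. h (xs ! l))"
  by (simp add: sum_list_sum_nth atLeast0LessThan)

lemma core:
  fixes P :: "'s::finite \<Rightarrow> 's \<Rightarrow> real" and mu :: "'s \<Rightarrow> real"
    and g :: "'s \<Rightarrow> 'v::real_inner"
  assumes P: "stochastic P" and mu0: "\<And>s. 0 \<le> mu s" and mu1: "(\<Sum>s\<in>UNIV. mu s) = 1"
    and K1: "1 \<le> K" and Km: "K \<le> m"
    and dl: "\<delta> > (real K * (real (m div K) - 1) + 1) * d_mix P mu K"
    and gG: "\<And>s. norm (g s) \<le> G"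
    and Lz: "e + (K - 1) + m \<le> L"
  shows "1 - \<delta> \<le> mexp P L (\<lambda>ys. if norm ((1 / real m) *\<^sub>R (\<Sum>i\<in>{1..m}. g (ys ! (e + (K - 1) + (i - 1))))
              - (\<Sum>s\<in>UNIV. mu s *\<^sub>R g s))
           \<le> 6 * G / sqrt (real (m div K)) *
                  (1 + sqrt (ln (real K / (\<delta> - (real K * (real (m div K) - 1) + 1) * d_mix P mu K))))
                + 2 * G * real K / real m then 1 else 0) x"
proof -
  define n where "n = m div K"
  define d where "d = d_mix P mu K"
  define \<delta>' where "\<delta>' = \<delta> - (real K * (real n - 1) + 1) * d"
  define gb where "gb = (\<Sum>s\<in>UNIV. mu s *\<^sub>R g s)"
  define h where "h s = g s - gb" for s
  define r where "r = 6 * G * sqrt (real n) * (1 + sqrt (ln (real K / \<delta>')))"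
  define thr where "thr = 6 * G / sqrt (real n) * (1 + sqrt (ln (real K / \<delta>'))) + 2 * G * real K / real m"
  define good where "good ys = (if norm ((1 / real m) *\<^sub>R (\<Sum>i\<in>{1..m}. g (ys ! (e + (K - 1) + (i - 1)))) - gb) \<le> thr then 1 else (0::real))" for ys
  define bad where "bad j ys = (if r < norm (sum_list (map h (subs K n (drop (e + j) ys)))) then 1 else (0::real))" for j ys
  have n1: "n \<ge> 1" unfolding n_def using div_le_mono[OF Km, of K] K1 by simp
  have nKm: "n * K \<le> m" unfolding n_def by simp
  have G: "G \<ge> 0" using gG[of undefined] norm_ge_zero[of "g undefined"] by linarith
  have d0: "d \<ge> 0" unfolding d_def by (rule dmix_nonneg)
  have dp: "\<delta>' > 0" unfolding \<delta>'_def n_def d_def using dl by simp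
  have P0: "\<And>x y. 0 \<le> P x y" using P unfolding stochastic_def by auto
  have gbn: "norm gb \<le> G"
  proof -
    have "norm gb \<le> (\<Sum>s\<in>UNIV. norm (mu s *\<^sub>R g s))" unfolding gb_def by (rule norm_sum)
    also have "\<dots> \<le> (\<Sum>s\<in>UNIV. mu s * G)"
      using mu0 gG by (intro sum_mono) (simp add: mult_left_mono)
    also have "\<dots> = G" using mu1 by (simp add: sum_distrib_right[symmetric])
    finally show ?thesis .
  qed
  have hc: "norm (h s) \<le> 2 * G" for s
    using norm_triangle_ineq4[of "g s" gb] gG[of s] gbn unfolding h_def by linarith
  have m0: "(\<Sum>s\<in>UNIV. mu s *\<^sub>R h s) = 0"
    unfolding h_def gb_def by (simp add: scaleR_diff_right sum_subtractf mu1 flip: scaleR_left.sum)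
  have badb: "mexp P L (bad j) x \<le> real (n - 1) * d + \<delta>' / real K" if j: "j < K" for j
  proof -
    have "mexp P L (\<lambda>ys. (\<lambda>xs. if r < norm (sum_list (map h xs)) then 1 else (0::real)) (subs K n (drop (e + j) ys))) x
        \<le> real (n - 1) * d + \<delta>' / real K"
    proof (rule mexp_window[OF P K1])
      show "e + j + K * n \<le> L" using Lz nKm j by (simp add: mult.commute)
      fix u
      show "mexp (mpow P K) n (\<lambda>xs. if r < norm (sum_list (map h xs)) then 1 else 0) u
          \<le> real (n - 1) * d + \<delta>' / real K"
        unfolding r_def
        by (rule sub_bound[OF mpow_stoch(1)[OF P] mpow_stoch(2)[OF P] mu0 mu1 _ m0 hc G n1 dp K1])
           (use tv_le_dmix d_def in auto)
    qed
    then show ?thesis unfolding bad_def by simp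
  qed
  have detb: "1 - good ys \<le> (\<Sum>j<K. bad j ys)" if len: "length ys = L" for ys
  proof (cases "\<exists>j<K. bad j ys = 1")
    case True
    then obtain j where "j < K" "bad j ys = 1" by auto
    then have "bad j ys \<le> (\<Sum>j<K. bad j ys)"
      by (intro member_le_sum) (auto simp: bad_def)
    moreover have "0 \<le> good ys" unfolding good_def by simp
    ultimately show ?thesis using \<open>bad j ys = 1\<close> by linarith
  next
    case False
    define b where "b i = h (ys ! (e + (K - 1) + i))" for i
    have Sj: "norm (\<Sum>l<m div K. b (l * K + j)) \<le> r" if "j < K" for j
    proof -
      have "bad j ys \<noteq> 1" using False that by auto
      then have le: "norm (sum_list (map h (subs K n (drop (e + j) ys)))) \<le> r"
        unfolding bad_def by (auto split: if_splits)
      have "sum_list (map h (subs K n (drop (e + j) ys))) = (\<Sum>l<n. h (subs K n (drop (e + j) ys) ! l))"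
        by (simp add: sum_list_map_nth subs_length)
      also have "\<dots> = (\<Sum>l<n. b (l * K + j))"
      proof (rule sum.cong[OF refl])
        fix l assume l: "l \<in> {..<n}"
        have "n * K \<le> length (drop (e + j) ys)" using len Lz nKm that by simp
        then have "subs K n (drop (e + j) ys) ! l = drop (e + j) ys ! (l * K + (K - 1))"
          using l by (intro subs_nth) auto
        also have "\<dots> = ys ! (e + j + (l * K + (K - 1)))"
          using len Lz that by (intro nth_drop) simp
        also have "e + j + (l * K + (K - 1)) = e + (K - 1) + (l * K + j)" by simp
        finally show "h (subs K n (drop (e + j) ys) ! l) = b (l * K + j)" unfolding b_def by simp
      qed
      finally show ?thesis using le unfolding n_def by simp
    qed
    have r0: "r \<ge> 0"
    proof -
      have "norm (\<Sum>l<m div K. b (l * K + 0)) \<le> r" using Sj[of 0] K1 by simp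
      moreover have "0 \<le> norm (\<Sum>l<m div K. b (l * K + 0))" by (rule norm_ge_zero)
      ultimately show ?thesis by linarith
    qed
    have dtb: "norm (\<Sum>i<m. b i) \<le> real K * r + real (m - m div K * K) * (2 * G)"
      by (rule det[OF K1 _ Sj]) (auto simp: b_def hc)
    have sumeq: "(1 / real m) *\<^sub>R (\<Sum>i\<in>{1..m}. g (ys ! (e + (K - 1) + (i - 1)))) - gb
        = (1 / real m) *\<^sub>R (\<Sum>i<m. b i)"
    proof -
      have "(\<Sum>i\<in>{1..m}. g (ys ! (e + (K - 1) + (i - 1)))) = (\<Sum>i<m. g (ys ! (e + (K - 1) + i)))"
        using sum.atLeast1_atMost_eq[of "\<lambda>i. g (ys ! (e + (K - 1) + (i - 1)))" m] by simp
      moreover have "(\<Sum>i<m. b i) = (\<Sum>i<m. g (ys ! (e + (K - 1) + i))) - real m *\<^sub>R gb"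
        unfolding b_def h_def by (simp add: sum_subtractf sum_constant_scaleR)
      moreover have "m > 0" using K1 Km by simp
      ultimately show ?thesis by (simp add: scaleR_diff_right)
    qed
    have mp: "real m > 0" using K1 Km by simp
    have "norm ((1 / real m) *\<^sub>R (\<Sum>i\<in>{1..m}. g (ys ! (e + (K - 1) + (i - 1)))) - gb)
        = norm (\<Sum>i<m. b i) / real m" unfolding sumeq using mp by simp
    also have "\<dots> \<le> (real K * r + real (m - m div K * K) * (2 * G)) / real m"
      using dtb mp by (simp add: divide_right_mono)
    also have "\<dots> \<le> thr"
    proof -
      have a1: "real K * r / real m \<le> r / real n"
      proof -
        have "real (n * K) \<le> real m" using nKm by linarith
        then have "real K * real n \<le> real m" by (simp add: mult.commute)
        then show ?thesis using r0 mp n1 by (simp add: field_simps mult_left_mono)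
      qed
      have a2: "r / real n = 6 * G / sqrt (real n) * (1 + sqrt (ln (real K / \<delta>')))"
      proof -
        have sn: "sqrt (real n) > 0" using n1 by simp
        have e: "real n = sqrt (real n) * sqrt (real n)" by simp
        have gen: "\<And>q X. q > 0 \<Longrightarrow> 6 * G * q * X / (q * q) = 6 * G / q * X"
          by (simp add: field_simps power2_eq_square)
        show ?thesis unfolding r_def
          using gen[OF sn, of "1 + sqrt (ln (real K / \<delta>'))"] e by metis
      qed
      have a3: "real (m - m div K * K) \<le> real K"
      proof -
        have "m - m div K * K = m mod K" by (simp add: minus_div_mult_eq_mod)
        also have "\<dots> < K" using K1 by simp
        finally have X: "m - m div K * K < K" .
        show ?thesis using X by (metis less_imp_le of_nat_le_iff)
      qed
      have a4: "real (m - m div K * K) * (2 * G) / real m \<le> 2 * G * real K / real m"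
      proof -
        have "real (m - m div K * K) * (2 * G) \<le> real K * (2 * G)"
          using a3 G by (intro mult_right_mono) auto
        then have "real (m - m div K * K) * (2 * G) / real m \<le> real K * (2 * G) / real m"
          using mp by (intro divide_right_mono) auto
        also have "real K * (2 * G) / real m = 2 * G * real K / real m" by (simp add: mult_ac)
        finally show ?thesis .
      qed
      show ?thesis unfolding thr_def using a1 a2 a4 by (simp add: add_divide_distrib n_def)
    qed
    finally have "good ys = 1" unfolding good_def by simp
    then show ?thesis by (simp add: sum_nonneg bad_def)
  qed
  have "mexp P L (\<lambda>ys. 1 + (-1) * good ys) x = mexp P L (\<lambda>_. 1) x + mexp P L (\<lambda>ys. (-1) * good ys) x"
    by (rule mexp_add)
  also have "\<dots> = 1 - mexp P L good x" by (simp only: mexp_const[OF P] mexp_cmult)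
  finally have "1 - mexp P L good x = mexp P L (\<lambda>ys. 1 + (-1) * good ys) x" by simp
  also have "\<dots> \<le> mexp P L (\<lambda>ys. \<Sum>j<K. bad j ys) x"
    by (rule mexp_mono[OF P0]) (use detb in simp)
  also have "\<dots> = (\<Sum>j<K. mexp P L (bad j) x)" by (rule mexp_sum) simp
  also have "\<dots> \<le> (\<Sum>j<K. real (n - 1) * d + \<delta>' / real K)" by (intro sum_mono badb) simp
  also have "\<dots> = real K * (real (n - 1) * d) + \<delta>'" using K1 by (simp add: distrib_left)
  also have "\<dots> \<le> \<delta>"
  proof -
    have "real (n - 1) = real n - 1" using n1 by simp
    then show ?thesis unfolding \<delta>'_def using d0 by (simp add: algebra_simps)
  qed
  finally have "1 - \<delta> \<le> mexp P L good x" by simp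
  then show ?thesis unfolding good_def thr_def \<delta>'_def gb_def n_def d_def .
qed


definition Eset :: "'a measure \<Rightarrow> (nat \<Rightarrow> 'a \<Rightarrow> 's) \<Rightarrow> nat \<Rightarrow> (nat \<Rightarrow> 's) \<Rightarrow> 'a set" where
  "Eset M z k xs = {\<omega>\<in>space M. \<forall>i\<in>{1..k}. z i \<omega> = xs i}"

definition Nset :: "'a measure \<Rightarrow> (nat \<Rightarrow> 'a \<Rightarrow> nat) \<Rightarrow> nat \<Rightarrow> (nat \<Rightarrow> nat) \<Rightarrow> 'a set" where
  "Nset M N mm ns = {\<omega>\<in>space M. \<forall>s\<in>{1..mm}. N s \<omega> = ns s}"

definition Zp :: "'a measure \<Rightarrow> (nat \<Rightarrow> 'a \<Rightarrow> 's) \<Rightarrow> nat \<Rightarrow> nat \<Rightarrow> 's list \<Rightarrow> 'a set" where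
  "Zp M z k L ys = {\<omega>\<in>space M. \<forall>p<L. z (k + 1 + p) \<omega> = ys ! p}"

lemma z_meas: "markov_chain_on M P z \<Longrightarrow> k \<ge> 1 \<Longrightarrow> {\<omega>\<in>space M. z k \<omega> = v} \<in> sets M"
proof -
  assume "markov_chain_on M P z" "k \<ge> 1"
  then have m: "z k \<in> measurable M (count_space UNIV)" unfolding markov_chain_on_def by auto
  have "{\<omega>\<in>space M. z k \<omega> = v} = z k -` {v} \<inter> space M" by auto
  also have "\<dots> \<in> sets M" by (rule measurable_sets[OF m]) simp
  finally show ?thesis .
qed

lemma N_meas: "batch_sizes M z N \<Longrightarrow> s \<ge> 1 \<Longrightarrow> {\<omega>\<in>space M. N s \<omega> = v} \<in> sets M"
proof -
  assume "batch_sizes M z N" "s \<ge> 1"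
  then have m: "N s \<in> measurable M (count_space UNIV)" unfolding batch_sizes_def by auto
  have "{\<omega>\<in>space M. N s \<omega> = v} = N s -` {v} \<inter> space M" by auto
  also have "\<dots> \<in> sets M" by (rule measurable_sets[OF m]) simp
  finally show ?thesis .
qed

lemma Eset_sets: "markov_chain_on M P z \<Longrightarrow> Eset M z k xs \<in> sets M"
  unfolding Eset_def by (intro sets.sets_Collect_finite_All z_meas) auto

lemma Nset_sets: "batch_sizes M z N \<Longrightarrow> Nset M N mm ns \<in> sets M"
  unfolding Nset_def by (intro sets.sets_Collect_finite_All N_meas) auto

lemma Zp_sets: "markov_chain_on M P z \<Longrightarrow> Zp M z k L ys \<in> sets M"
proof -
  assume mc: "markov_chain_on M P z"
  have "Zp M z k L ys = {\<omega>\<in>space M. \<forall>p\<in>{..<L}. z (k + 1 + p) \<omega> = ys ! p}" unfolding Zp_def by auto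
  also have "\<dots> \<in> sets M" by (intro sets.sets_Collect_finite_All z_meas[OF mc]) auto
  finally show ?thesis .
qed

lemma markovN:
  assumes mc: "markov_chain_on M P z" and bs: "batch_sizes M z N" and k: "k \<ge> 1"
  shows "measure M (Nset M N mm ns \<inter> Eset M z (Suc k) xs)
       = measure M (Nset M N mm ns \<inter> Eset M z k xs) * P (xs k) (xs (Suc k))"
proof -
  have eq: "Nset M N mm ns \<inter> Eset M z j xs = {\<omega>\<in>space M. (\<forall>i\<in>{1..j}. z i \<omega> = xs i) \<and> (\<forall>s\<in>{1..mm}. N s \<omega> = ns s)}" for j
    unfolding Nset_def Eset_def by auto
  have bsf: "\<And>j. measure M {\<omega>\<in>space M. (\<forall>i\<in>{1..j}. z i \<omega> = xs i) \<and> (\<forall>s\<in>{1..mm}. N s \<omega> = ns s)}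
        = measure M {\<omega>\<in>space M. \<forall>i\<in>{1..j}. z i \<omega> = xs i} * (\<Prod>s\<in>{1..mm}. measure M {\<omega>\<in>space M. N s \<omega> = ns s})"
    using bs unfolding batch_sizes_def by blast
  have mcf: "measure M {\<omega>\<in>space M. \<forall>i\<in>{1..Suc k}. z i \<omega> = xs i}
        = measure M {\<omega>\<in>space M. \<forall>i\<in>{1..k}. z i \<omega> = xs i} * P (xs k) (xs (Suc k))"
    using mc k unfolding markov_chain_on_def by blast
  show ?thesis unfolding eq bsf mcf by (simp add: mult_ac)
qed

lemma finite_len: "finite {ys :: ('s::finite) list. length ys = L}"
  using finite_lists_length_eq[of "UNIV :: 's set" L] by simp

lemma lists_Suc_sum:
  "(\<Sum>ys\<in>{ys :: ('s::finite) list. length ys = Suc L}. f ys)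
   = (\<Sum>y\<in>UNIV. \<Sum>ys\<in>{ys. length ys = L}. f (y # ys))"
proof -
  have img: "{ys :: 's list. length ys = Suc L} = (\<lambda>(y, ys). y # ys) ` (UNIV \<times> {ys. length ys = L})"
  proof
    show "{ys :: 's list. length ys = Suc L} \<subseteq> (\<lambda>(y, ys). y # ys) ` (UNIV \<times> {ys. length ys = L})"
    proof
      fix ys :: "'s list" assume "ys \<in> {ys. length ys = Suc L}"
      then obtain y ys' where "ys = y # ys'" "length ys' = L" by (cases ys) auto
      then show "ys \<in> (\<lambda>(y, ys). y # ys) ` (UNIV \<times> {ys. length ys = L})" by force
    qed
  qed auto
  have inj: "inj_on (\<lambda>(y, ys). y # ys) (UNIV \<times> {ys :: 's list. length ys = L})"
    by (auto simp: inj_on_def)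
  have "(\<Sum>ys\<in>{ys :: 's list. length ys = Suc L}. f ys) = (\<Sum>(y, ys)\<in>UNIV \<times> {ys. length ys = L}. f (y # ys))"
    unfolding img by (subst sum.reindex[OF inj]) (simp add: case_prod_beta')
  also have "\<dots> = (\<Sum>y\<in>UNIV. \<Sum>ys\<in>{ys. length ys = L}. f (y # ys))"
    by (rule sum.cartesian_product[symmetric])
  finally show ?thesis .
qed

lemma pathsum:
  fixes P :: "'s::finite \<Rightarrow> 's \<Rightarrow> real"
  assumes mc: "markov_chain_on M P z" and bs: "batch_sizes M z N"
  shows "k \<ge> 1 \<Longrightarrow> (\<Sum>ys\<in>{ys. length ys = L}. measure M (Nset M N mm ns \<inter> Eset M z k xs \<inter> Zp M z k L ys) * F ys)
     = measure M (Nset M N mm ns \<inter> Eset M z k xs) * mexp P L F (xs k)"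
proof (induction L arbitrary: k xs F)
  case 0
  have "{ys :: 's list. length ys = 0} = {[]}" by auto
  moreover have "Zp M z k 0 [] = space M" unfolding Zp_def by auto
  moreover have "Nset M N mm ns \<inter> Eset M z k xs \<inter> space M = Nset M N mm ns \<inter> Eset M z k xs"
    unfolding Nset_def by auto
  ultimately show ?case by simp
next
  case (Suc L)
  define A where "A = Nset M N mm ns \<inter> Eset M z k xs"
  have "(\<Sum>ys\<in>{ys. length ys = Suc L}. measure M (A \<inter> Zp M z k (Suc L) ys) * F ys)
     = (\<Sum>y\<in>UNIV. \<Sum>ys\<in>{ys. length ys = L}. measure M (A \<inter> Zp M z k (Suc L) (y # ys)) * F (y # ys))"
    by (rule lists_Suc_sum)
  also have "\<dots> = (\<Sum>y\<in>UNIV. measure M A * P (xs k) y * mexp P L (\<lambda>ys. F (y # ys)) y)"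
  proof (rule sum.cong[OF refl])
    fix y
    define xs' where "xs' = xs(Suc k := y)"
    have setq: "A \<inter> Zp M z k (Suc L) (y # ys) = Nset M N mm ns \<inter> Eset M z (Suc k) xs' \<inter> Zp M z (Suc k) L ys" for ys
    proof -
      have "(\<forall>p<Suc L. z (k + 1 + p) \<omega> = (y # ys) ! p) \<longleftrightarrow> z (Suc k) \<omega> = y \<and> (\<forall>p<L. z (Suc k + 1 + p) \<omega> = ys ! p)" for \<omega>
      proof
        assume a: "\<forall>p<Suc L. z (k + 1 + p) \<omega> = (y # ys) ! p"
        have "z (Suc k) \<omega> = y" using a[rule_format, of 0] by simp
        moreover have "z (Suc k + 1 + p) \<omega> = ys ! p" if "p < L" for p
          using a[rule_format, of "Suc p"] that by simp
        ultimately show "z (Suc k) \<omega> = y \<and> (\<forall>p<L. z (Suc k + 1 + p) \<omega> = ys ! p)" by blast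
      next
        assume a: "z (Suc k) \<omega> = y \<and> (\<forall>p<L. z (Suc k + 1 + p) \<omega> = ys ! p)"
        show "\<forall>p<Suc L. z (k + 1 + p) \<omega> = (y # ys) ! p"
        proof (intro allI impI)
          fix p assume p: "p < Suc L"
          show "z (k + 1 + p) \<omega> = (y # ys) ! p"
          proof (cases p)
            case 0 then show ?thesis using a by simp
          next
            case (Suc q) then show ?thesis using a p by simp
          qed
        qed
      qed
      moreover have "(\<forall>i\<in>{1..Suc k}. z i \<omega> = xs' i) \<longleftrightarrow> (\<forall>i\<in>{1..k}. z i \<omega> = xs i) \<and> z (Suc k) \<omega> = y" for \<omega>
      proof
        assume a: "\<forall>i\<in>{1..Suc k}. z i \<omega> = xs' i"
        have "z (Suc k) \<omega> = y" using a[rule_format, of "Suc k"] unfolding xs'_def by simp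
        moreover have "z i \<omega> = xs i" if "i \<in> {1..k}" for i
          using a[rule_format, of i] that unfolding xs'_def by simp
        ultimately show "(\<forall>i\<in>{1..k}. z i \<omega> = xs i) \<and> z (Suc k) \<omega> = y" by blast
      next
        assume a: "(\<forall>i\<in>{1..k}. z i \<omega> = xs i) \<and> z (Suc k) \<omega> = y"
        show "\<forall>i\<in>{1..Suc k}. z i \<omega> = xs' i"
        proof
          fix i assume i: "i \<in> {1..Suc k}"
          show "z i \<omega> = xs' i"
          proof (cases "i = Suc k")
            case True then show ?thesis using a unfolding xs'_def by simp
          next
            case False then have "i \<in> {1..k}" using i by auto
            then show ?thesis using a False unfolding xs'_def by simp
          qed
        qed
      qed
      ultimately show ?thesis unfolding A_def Nset_def Eset_def Zp_def by auto
    qed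
    have "(\<Sum>ys\<in>{ys. length ys = L}. measure M (A \<inter> Zp M z k (Suc L) (y # ys)) * F (y # ys))
        = (\<Sum>ys\<in>{ys. length ys = L}. measure M (Nset M N mm ns \<inter> Eset M z (Suc k) xs' \<inter> Zp M z (Suc k) L ys) * F (y # ys))"
      unfolding setq ..
    also have "\<dots> = measure M (Nset M N mm ns \<inter> Eset M z (Suc k) xs') * mexp P L (\<lambda>ys. F (y # ys)) (xs' (Suc k))"
      by (rule Suc.IH) simp
    also have "measure M (Nset M N mm ns \<inter> Eset M z (Suc k) xs') = measure M (Nset M N mm ns \<inter> Eset M z k xs') * P (xs' k) (xs' (Suc k))"
      by (rule markovN[OF mc bs Suc.prems])
    also have "Eset M z k xs' = Eset M z k xs" unfolding Eset_def xs'_def by auto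
    finally show "(\<Sum>ys\<in>{ys. length ys = L}. measure M (A \<inter> Zp M z k (Suc L) (y # ys)) * F (y # ys))
        = measure M A * P (xs k) y * mexp P L (\<lambda>ys. F (y # ys)) y"
      unfolding A_def xs'_def by simp
  qed
  also have "\<dots> = measure M A * mexp P (Suc L) F (xs k)"
    by (simp add: sum_distrib_left mult.assoc)
  finally show ?case unfolding A_def .
qed


lemma map_upt_eq:
  "(map f [1..<Suc n] = b) \<longleftrightarrow> length b = n \<and> (\<forall>s\<in>{1..n}. f s = b ! (s - 1))"
proof
  assume h: "map f [1..<Suc n] = b"
  then have l: "length b = n" by auto
  have "f s = b ! (s - 1)" if "s \<in> {1..n}" for s
  proof -
    have sl: "s - 1 < n" using that by auto
    have "b ! (s - 1) = map f [1..<Suc n] ! (s - 1)" using h by simp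
    also have "\<dots> = f ([1..<Suc n] ! (s - 1))" using sl by (intro nth_map) simp
    also have "[1..<Suc n] ! (s - 1) = 1 + (s - 1)" using that by (intro nth_upt) auto
    finally show ?thesis using that by simp
  qed
  then show "length b = n \<and> (\<forall>s\<in>{1..n}. f s = b ! (s - 1))" using l by blast
next
  assume h: "length b = n \<and> (\<forall>s\<in>{1..n}. f s = b ! (s - 1))"
  show "map f [1..<Suc n] = b"
  proof (rule nth_equalityI)
    show "length (map f [1..<Suc n]) = length b" using h by simp
    fix i assume "i < length (map f [1..<Suc n])"
    then have i: "i < n" by (simp del: upt_Suc)
    have "map f [1..<Suc n] ! i = f (1 + i)" using i by (simp del: upt_Suc)
    also have "\<dots> = b ! i" using h i by (metis Suc_eq_plus1 add.commute atLeastAtMost_iff diff_Suc_1 le_add1 less_eq_Suc_le plus_1_eq_Suc)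
    finally show "map f [1..<Suc n] ! i = b ! i" .
  qed
qed

definition gmap :: "(nat \<Rightarrow> 'a \<Rightarrow> 's) \<Rightarrow> (nat \<Rightarrow> 'a \<Rightarrow> nat) \<Rightarrow> nat \<Rightarrow> 'a \<Rightarrow> nat list \<times> 's list" where
  "gmap z N t \<omega> = (map (\<lambda>s. N s \<omega>) [1..<t], map (\<lambda>k. z k \<omega>) [1..<Suc (S_before N t \<omega>)])"

lemma atom_char:
  assumes t: "t \<ge> 1"
  shows "{\<omega>\<in>space M. gmap z N t \<omega> = c} = {} \<or>
    (\<exists>ns s0 xs. {\<omega>\<in>space M. gmap z N t \<omega> = c} = Nset M N (t - 1) ns \<inter> Eset M z s0 xs \<and>
         (\<forall>\<omega>\<in>{\<omega>\<in>space M. gmap z N t \<omega> = c}. S_before N t \<omega> = s0))"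
proof -
  obtain a b where c: "c = (a, b)" by (cases c)
  define ns where "ns s = a ! (s - 1)" for s
  define s0 where "s0 = (\<Sum>s\<in>{1..<t}. ns s)"
  define xs where "xs k = b ! (k - 1)" for k
  have tt: "[1..<t] = [1..<Suc (t - 1)]" using t by simp
  have A1: "(map (\<lambda>s. N s \<omega>) [1..<t] = a) \<longleftrightarrow> length a = t - 1 \<and> (\<forall>s\<in>{1..t - 1}. N s \<omega> = ns s)" for \<omega>
    unfolding tt map_upt_eq ns_def ..
  have S: "S_before N t \<omega> = s0" if "\<forall>s\<in>{1..t - 1}. N s \<omega> = ns s" for \<omega>
  proof -
    have "{1..<t} = {1..t - 1}" using t by auto
    then show ?thesis unfolding S_before_def s0_def using that by (intro sum.cong) auto
  qed
  show ?thesis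
  proof (cases "length a = t - 1 \<and> length b = s0")
    case False
    have "{\<omega>\<in>space M. gmap z N t \<omega> = c} = {}"
    proof (rule ccontr)
      assume "{\<omega>\<in>space M. gmap z N t \<omega> = c} \<noteq> {}"
      then obtain \<omega> where "\<omega> \<in> space M" "gmap z N t \<omega> = c" by auto
      then have h1: "map (\<lambda>s. N s \<omega>) [1..<t] = a" and h2: "map (\<lambda>k. z k \<omega>) [1..<Suc (S_before N t \<omega>)] = b"
        unfolding gmap_def c by auto
      from h1 A1 have "length a = t - 1" "\<forall>s\<in>{1..t - 1}. N s \<omega> = ns s" by auto
      with S have "S_before N t \<omega> = s0" by auto
      with h2 have "length b = s0" by auto
      with False \<open>length a = t - 1\<close> show False by auto
    qed
    then show ?thesis by auto
  next
    case True
    have eq: "{\<omega>\<in>space M. gmap z N t \<omega> = c} = Nset M N (t - 1) ns \<inter> Eset M z s0 xs"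
    proof (intro set_eqI iffI)
      fix \<omega> assume "\<omega> \<in> {\<omega>\<in>space M. gmap z N t \<omega> = c}"
      then have sp: "\<omega> \<in> space M" and h1: "map (\<lambda>s. N s \<omega>) [1..<t] = a" and h2: "map (\<lambda>k. z k \<omega>) [1..<Suc (S_before N t \<omega>)] = b"
        unfolding gmap_def c by auto
      from h1 A1 have n1: "\<forall>s\<in>{1..t - 1}. N s \<omega> = ns s" by auto
      with S have "S_before N t \<omega> = s0" by auto
      with h2 have "\<forall>k\<in>{1..s0}. z k \<omega> = xs k" unfolding map_upt_eq xs_def by auto
      then show "\<omega> \<in> Nset M N (t - 1) ns \<inter> Eset M z s0 xs" using sp n1 unfolding Nset_def Eset_def by auto
    next
      fix \<omega> assume "\<omega> \<in> Nset M N (t - 1) ns \<inter> Eset M z s0 xs"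
      then have sp: "\<omega> \<in> space M" and n1: "\<forall>s\<in>{1..t - 1}. N s \<omega> = ns s" and e1: "\<forall>k\<in>{1..s0}. z k \<omega> = xs k"
        unfolding Nset_def Eset_def by auto
      have h1: "map (\<lambda>s. N s \<omega>) [1..<t] = a" using A1 n1 True by auto
      have "S_before N t \<omega> = s0" using S n1 by auto
      then have h2: "map (\<lambda>k. z k \<omega>) [1..<Suc (S_before N t \<omega>)] = b"
        unfolding map_upt_eq using True e1 xs_def by auto
      show "\<omega> \<in> {\<omega>\<in>space M. gmap z N t \<omega> = c}" using sp h1 h2 unfolding gmap_def c by auto
    qed
    have "\<forall>\<omega>\<in>{\<omega>\<in>space M. gmap z N t \<omega> = c}. S_before N t \<omega> = s0"
      using S unfolding eq Nset_def by auto
    then show ?thesis using eq by blast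
  qed
qed

lemma blockbound:
  fixes P :: "'s::finite \<Rightarrow> 's \<Rightarrow> real"
  assumes ps: "prob_space M" and mc: "markov_chain_on M P z" and bs: "batch_sizes M z N"
    and k: "k \<ge> 1"
    and mb: "1 - \<delta> \<le> mexp P L (\<lambda>ys. if \<Phi> ys then 1 else 0) (xs k)"
    and Bc: "\<And>\<omega>. \<omega> \<in> Nset M N mm ns \<inter> Eset M z k xs \<Longrightarrow> (\<omega> \<in> B \<longleftrightarrow> \<Phi> (map (\<lambda>p. z (k + 1 + p) \<omega>) [0..<L]))"
  shows "B \<inter> (Nset M N mm ns \<inter> Eset M z k xs) \<in> sets M"
    "(1 - \<delta>) * measure M (Nset M N mm ns \<inter> Eset M z k xs) \<le> measure M (B \<inter> (Nset M N mm ns \<inter> Eset M z k xs))"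
proof -
  define X where "X = Nset M N mm ns \<inter> Eset M z k xs"
  define S where "S = {ys. length ys = L \<and> \<Phi> ys}"
  have Xs: "X \<in> sets M" unfolding X_def using Nset_sets[OF bs] Eset_sets[OF mc] by blast
  have Xsp: "X \<subseteq> space M" unfolding X_def Nset_def by auto
  have fS: "finite S" unfolding S_def by (rule finite_subset[OF _ finite_len[of L]]) auto
  have pathchar: "\<omega> \<in> Zp M z k L ys \<longleftrightarrow> \<omega> \<in> space M \<and> map (\<lambda>p. z (k + 1 + p) \<omega>) [0..<L] = ys"
    if "length ys = L" for \<omega> ys
  proof -
    have "map (\<lambda>p. z (k + 1 + p) \<omega>) [0..<L] = ys \<longleftrightarrow> (\<forall>p<L. z (k + 1 + p) \<omega> = ys ! p)"
      using that by (auto simp: list_eq_iff_nth_eq)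
    then show ?thesis unfolding Zp_def by auto
  qed
  have eqB: "B \<inter> X = (\<Union>ys\<in>S. X \<inter> Zp M z k L ys)"
  proof (intro set_eqI iffI)
    fix \<omega> assume w: "\<omega> \<in> B \<inter> X"
    define ys where "ys = map (\<lambda>p. z (k + 1 + p) \<omega>) [0..<L]"
    have "ys \<in> S" using Bc w unfolding S_def ys_def X_def by auto
    moreover have "\<omega> \<in> Zp M z k L ys" using pathchar[of ys \<omega>] w Xsp unfolding ys_def by auto
    ultimately show "\<omega> \<in> (\<Union>ys\<in>S. X \<inter> Zp M z k L ys)" using w by auto
  next
    fix \<omega> assume "\<omega> \<in> (\<Union>ys\<in>S. X \<inter> Zp M z k L ys)"
    then obtain ys where ys: "ys \<in> S" "\<omega> \<in> X" "\<omega> \<in> Zp M z k L ys" by auto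
    then have "map (\<lambda>p. z (k + 1 + p) \<omega>) [0..<L] = ys" using pathchar[of ys \<omega>] unfolding S_def by auto
    then show "\<omega> \<in> B \<inter> X" using Bc[of \<omega>] ys unfolding S_def X_def by auto
  qed
  have Zs: "X \<inter> Zp M z k L ys \<in> sets M" for ys using Xs Zp_sets[OF mc] by blast
  show "B \<inter> (Nset M N mm ns \<inter> Eset M z k xs) \<in> sets M"
    unfolding X_def[symmetric] eqB using fS Zs by (intro sets.finite_UN) auto
  have disj: "disjoint_family_on (\<lambda>ys. X \<inter> Zp M z k L ys) S"
    unfolding disjoint_family_on_def
  proof (intro ballI impI)
    fix a b assume ab: "a \<in> S" "b \<in> S" "a \<noteq> b"
    show "X \<inter> Zp M z k L a \<inter> (X \<inter> Zp M z k L b) = {}"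
    proof (rule ccontr)
      assume "X \<inter> Zp M z k L a \<inter> (X \<inter> Zp M z k L b) \<noteq> {}"
      then obtain \<omega> where "\<omega> \<in> Zp M z k L a" "\<omega> \<in> Zp M z k L b" by blast
      then have "map (\<lambda>p. z (k + 1 + p) \<omega>) [0..<L] = a" "map (\<lambda>p. z (k + 1 + p) \<omega>) [0..<L] = b"
        using pathchar ab unfolding S_def by auto
      then show False using ab by simp
    qed
  qed
  have "measure M (B \<inter> X) = (\<Sum>ys\<in>S. measure M (X \<inter> Zp M z k L ys))"
    unfolding eqB using fS Zs disj
  proof (intro measure_finite_Union)
    fix ys show "emeasure M (X \<inter> Zp M z k L ys) \<noteq> \<infinity>"
      using finite_measure.emeasure_finite[OF prob_space.finite_measure[OF ps]] by simp
  qed auto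
  also have "\<dots> = (\<Sum>ys\<in>{ys. length ys = L}. measure M (X \<inter> Zp M z k L ys) * (if \<Phi> ys then 1 else 0))"
  proof -
    have "(\<Sum>ys\<in>{ys. length ys = L}. measure M (X \<inter> Zp M z k L ys) * (if \<Phi> ys then 1 else 0))
        = (\<Sum>ys\<in>{ys. length ys = L}. if \<Phi> ys then measure M (X \<inter> Zp M z k L ys) else 0)"
      by (intro sum.cong) auto
    also have "\<dots> = (\<Sum>ys\<in>{ys\<in>{ys. length ys = L}. \<Phi> ys}. measure M (X \<inter> Zp M z k L ys))"
      by (rule sum.inter_filter[OF finite_len, symmetric])
    also have "{ys\<in>{ys. length ys = L}. \<Phi> ys} = S" unfolding S_def by auto
    finally show ?thesis by simp
  qed
  also have "\<dots> = measure M X * mexp P L (\<lambda>ys. if \<Phi> ys then 1 else 0) (xs k)"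
    unfolding X_def by (rule pathsum[OF mc bs k])
  finally have eqm: "measure M (B \<inter> X) = measure M X * mexp P L (\<lambda>ys. if \<Phi> ys then 1 else 0) (xs k)" .
  have "(1 - \<delta>) * measure M X \<le> mexp P L (\<lambda>ys. if \<Phi> ys then 1 else 0) (xs k) * measure M X"
    using mb by (intro mult_right_mono) auto
  then show "(1 - \<delta>) * measure M (Nset M N mm ns \<inter> Eset M z k xs) \<le> measure M (B \<inter> (Nset M N mm ns \<inter> Eset M z k xs))"
    unfolding X_def[symmetric] eqm by (simp add: mult.commute)
qed


lemma grad_eq:
  fixes f :: "'v::euclidean_space \<Rightarrow> 's::finite \<Rightarrow> real"
  assumes d1: "\<And>v s. ((\<lambda>u. f u s) has_derivative (\<lambda>h. gradf v s \<bullet> h)) (at v)"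
    and d2: "((\<lambda>u. \<Sum>s\<in>UNIV. mu s * f u s) has_derivative (\<lambda>h. gradF v \<bullet> h)) (at v)"
  shows "gradF v = (\<Sum>s\<in>UNIV. mu s *\<^sub>R gradf v s)"
proof -
  have d3: "((\<lambda>u. \<Sum>s\<in>UNIV. mu s * f u s) has_derivative (\<lambda>h. \<Sum>s\<in>UNIV. mu s * (gradf v s \<bullet> h))) (at v)"
    by (intro has_derivative_sum has_derivative_mult_right d1)
  have eq: "(\<lambda>h. gradF v \<bullet> h) = (\<lambda>h. \<Sum>s\<in>UNIV. mu s * (gradf v s \<bullet> h))"
    by (rule has_derivative_unique[OF d2 d3])
  define gb where "gb = (\<Sum>s\<in>UNIV. mu s *\<^sub>R gradf v s)"
  have "gradF v \<bullet> h = gb \<bullet> h" for h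
    using fun_cong[OF eq, of h] unfolding gb_def by (simp add: inner_sum_left)
  then have "(gradF v - gb) \<bullet> (gradF v - gb) = 0" by (simp add: inner_diff_left)
  then show ?thesis unfolding gb_def by simp
qed


theorem lemmaA4:
  fixes M :: "'a measure"
    and P :: "'s::finite \<Rightarrow> 's \<Rightarrow> real" and mu :: "'s \<Rightarrow> real"
    and z :: "nat \<Rightarrow> 'a \<Rightarrow> 's" and N :: "nat \<Rightarrow> 'a \<Rightarrow> nat"
    and Kset :: "'v::euclidean_space set"
    and f :: "'v \<Rightarrow> 's \<Rightarrow> real" and gradf :: "'v \<Rightarrow> 's \<Rightarrow> 'v" and gradF :: "'v \<Rightarrow> 'v"
    and G :: real and m K t :: nat and \<delta> :: real
    and w :: "'a \<Rightarrow> 'v"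
  assumes "prob_space M"
    and "ergodic_chain P" and "stationary_dist P mu"
    and "markov_chain_on M P z" and "batch_sizes M z N"
    and "\<And>v s. ((\<lambda>u. f u s) has_derivative (\<lambda>h. gradf v s \<bullet> h)) (at v)"
    and "\<And>v. ((\<lambda>u. \<Sum>s\<in>UNIV. mu s * f u s) has_derivative (\<lambda>h. gradF v \<bullet> h)) (at v)"
    and "\<And>v s. v \<in> Kset \<Longrightarrow> norm (gradf v s) \<le> G"
    and "t \<ge> 1"
    and "1 \<le> K" and "K \<le> m"
    and "\<delta> > (real K * (real (m div K) - 1) + 1) * d_mix P mu K"
    and "w \<in> borel_measurable (hist_sigma M z N t)"
    and "\<And>\<omega>. \<omega> \<in> space M \<Longrightarrow> w \<omega> \<in> Kset"
  shows "AE \<omega> in M. real_cond_exp M (hist_sigma M z N t)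
           (indicator {\<omega>'\<in>space M.
              norm ((1 / real m) *\<^sub>R (\<Sum>i\<in>{1..m}. gradf (w \<omega>') (z (S_before N t \<omega>' + K + i) \<omega>'))
                    - gradF (w \<omega>'))
              \<le> 6 * G / sqrt (real (m div K)) *
                  (1 + sqrt (ln (real K / (\<delta> - (real K * (real (m div K) - 1) + 1) * d_mix P mu K))))
                + 2 * G * real K / real m}) \<omega>
         \<ge> 1 - \<delta>"
proof -
  note ps = assms(1) and mc = assms(4) and bs = assms(5)
  interpret prob_space M by (rule ps)
  have P: "stochastic P" using assms(2) unfolding ergodic_chain_def by auto
  have mu0: "\<And>s. 0 \<le> mu s" and mu1: "(\<Sum>s\<in>UNIV. mu s) = 1"
    using assms(3) unfolding stationary_dist_def by auto
  have gF: "\<And>v. gradF v = (\<Sum>s\<in>UNIV. mu s *\<^sub>R gradf v s)" by (rule grad_eq[OF assms(6) assms(7)])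
  define thr where "thr = 6 * G / sqrt (real (m div K)) *
                  (1 + sqrt (ln (real K / (\<delta> - (real K * (real (m div K) - 1) + 1) * d_mix P mu K))))
                + 2 * G * real K / real m"
  define B where "B = {\<omega>'\<in>space M.
              norm ((1 / real m) *\<^sub>R (\<Sum>i\<in>{1..m}. gradf (w \<omega>') (z (S_before N t \<omega>' + K + i) \<omega>'))
                    - gradF (w \<omega>')) \<le> thr}"
  define Fm where "Fm = hist_sigma M z N t"
  define atom where "atom c = {\<omega>\<in>space M. gmap z N t \<omega> = c}" for c
  have geq: "gmap z N t = (\<lambda>\<omega>. (map (\<lambda>s. N s \<omega>) [1..<t], map (\<lambda>k. z k \<omega>) [1..<Suc (S_before N t \<omega>)]))"
    by (rule ext) (simp add: gmap_def)
  have Fm_eq: "Fm = vimage_algebra (space M) (gmap z N t) (count_space UNIV)"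
    unfolding Fm_def hist_sigma_def geq ..
  have setsFm: "sets Fm = {gmap z N t -` A \<inter> space M | A. A \<in> sets (count_space UNIV)}"
    unfolding Fm_eq by (rule sets_vimage_algebra2) simp
  have spFm: "space Fm = space M" unfolding Fm_eq by simp
  have atom_sets: "atom c \<in> sets M" for c
  proof -
    from atom_char[OF assms(9), of M z N c]
    show ?thesis unfolding atom_def[symmetric]
      using Nset_sets[OF bs] Eset_sets[OF mc] by auto
  qed
  have preimg: "gmap z N t -` A \<inter> space M = (\<Union>c\<in>A. atom c)" for A unfolding atom_def by auto
  have cntA: "countable A" for A :: "(nat list \<times> 's list) set"
    by (rule countableI_type)
  have subFm: "sets Fm \<subseteq> sets M"
  proof
    fix D assume "D \<in> sets Fm"
    then obtain A where "D = gmap z N t -` A \<inter> space M" using setsFm by auto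
    then have "D = (\<Union>c\<in>A. atom c)" using preimg by simp
    then show "D \<in> sets M" using cntA[of A] atom_sets by (auto intro: sets.countable_UN'')
  qed
  have atom_disj: "disjoint_family_on atom A" for A
    unfolding disjoint_family_on_def atom_def by auto
  have atomB: "B \<inter> atom c \<in> sets M \<and> (1 - \<delta>) * measure M (atom c) \<le> measure M (B \<inter> atom c)" for c
  proof (cases "atom c = {}")
    case True then show ?thesis by simp
  next
    case False
    then obtain ns s0 xs where at: "atom c = Nset M N (t - 1) ns \<inter> Eset M z s0 xs"
        and Sb: "\<forall>\<omega>\<in>atom c. S_before N t \<omega> = s0"
      using atom_char[OF assms(9), of M z N c] unfolding atom_def by blast
    obtain \<omega>0 where w0: "\<omega>0 \<in> atom c" using False by auto
    define v where "v = w \<omega>0"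
    have wv: "\<forall>\<omega>\<in>atom c. w \<omega> = v"
    proof -
      have wm: "w \<in> borel_measurable Fm" using assms(13) unfolding Fm_def .
      have "w -` {v} \<inter> space Fm \<in> sets Fm" by (rule measurable_sets[OF wm]) simp
      then obtain A where A: "w -` {v} \<inter> space M = gmap z N t -` A \<inter> space M" using setsFm spFm by auto
      have "\<omega>0 \<in> w -` {v} \<inter> space M" using w0 unfolding v_def atom_def by auto
      then have "c \<in> A" using w0 A unfolding atom_def by auto
      then show ?thesis using A unfolding atom_def by blast
    qed
    have vK: "v \<in> Kset" using assms(14) w0 unfolding v_def atom_def by auto
    have gG: "\<And>s. norm (gradf v s) \<le> G" using assms(8) vK by auto
    define \<Phi> where "\<Phi> e ys = (norm ((1 / real m) *\<^sub>R (\<Sum>i\<in>{1..m}. gradf v (ys ! (e + (K - 1) + (i - 1)))) - gradF v) \<le> thr)" for e ys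
    have coreb: "1 - \<delta> \<le> mexp P L (\<lambda>ys. if \<Phi> e ys then 1 else 0) x" if "e + (K - 1) + m \<le> L" for e L x
      unfolding \<Phi>_def thr_def gF[of v]
      by (rule core[OF P mu0 mu1 assms(10) assms(11) assms(12) gG that])
    have spa: "atom c \<subseteq> space M" unfolding atom_def by auto
    show ?thesis
    proof (cases "s0 = 0")
      case False
      have Bc: "\<omega> \<in> B \<longleftrightarrow> \<Phi> 1 (map (\<lambda>p. z (s0 + 1 + p) \<omega>) [0..<K + m])"
        if "\<omega> \<in> Nset M N (t - 1) ns \<inter> Eset M z s0 xs" for \<omega>
      proof -
        have wa: "\<omega> \<in> atom c" using that at by simp
        have "(\<Sum>i\<in>{1..m}. gradf (w \<omega>) (z (S_before N t \<omega> + K + i) \<omega>))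
            = (\<Sum>i\<in>{1..m}. gradf v ((map (\<lambda>p. z (s0 + 1 + p) \<omega>) [0..<K + m]) ! (1 + (K - 1) + (i - 1))))"
        proof (rule sum.cong[OF refl])
          fix i assume i: "i \<in> {1..m}"
          have "1 + (K - 1) + (i - 1) < K + m" using i assms(10) by auto
          then have "(map (\<lambda>p. z (s0 + 1 + p) \<omega>) [0..<K + m]) ! (1 + (K - 1) + (i - 1))
              = z (s0 + 1 + (1 + (K - 1) + (i - 1))) \<omega>" by simp
          also have "s0 + 1 + (1 + (K - 1) + (i - 1)) = s0 + K + i" using i assms(10) by auto
          finally show "gradf (w \<omega>) (z (S_before N t \<omega> + K + i) \<omega>)
              = gradf v ((map (\<lambda>p. z (s0 + 1 + p) \<omega>) [0..<K + m]) ! (1 + (K - 1) + (i - 1)))"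
            using wv wa Sb by simp
        qed
        then show ?thesis unfolding B_def \<Phi>_def using spa wv wa by auto
      qed
      have s01: "s0 \<ge> 1" using False by simp
      have mb: "1 - \<delta> \<le> mexp P (K + m) (\<lambda>ys. if \<Phi> 1 ys then 1 else 0) (xs s0)"
        by (rule coreb) (use assms(10) in simp)
      show ?thesis
        using blockbound[where k=s0 and L="K + m" and xs=xs and \<Phi>="\<Phi> 1" and \<delta>=\<delta> and B=B and mm="t - 1" and ns=ns,
            OF ps mc bs s01 mb Bc] unfolding at by simp
    next
      case True
      define X where "X y = Nset M N (t - 1) ns \<inter> Eset M z 1 (\<lambda>_. y)" for y
      have atX: "atom c = (\<Union>y\<in>UNIV. X y)"
        unfolding at True X_def Eset_def Nset_def by auto
      have Bc: "\<omega> \<in> B \<longleftrightarrow> \<Phi> 0 (map (\<lambda>p. z (1 + 1 + p) \<omega>) [0..<K - 1 + m])"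
        if "\<omega> \<in> Nset M N (t - 1) ns \<inter> Eset M z 1 (\<lambda>_. y)" for \<omega> y
      proof -
        have wa: "\<omega> \<in> atom c" using that atX unfolding X_def by blast
        have "(\<Sum>i\<in>{1..m}. gradf (w \<omega>) (z (S_before N t \<omega> + K + i) \<omega>))
            = (\<Sum>i\<in>{1..m}. gradf v ((map (\<lambda>p. z (1 + 1 + p) \<omega>) [0..<K - 1 + m]) ! (0 + (K - 1) + (i - 1))))"
        proof (rule sum.cong[OF refl])
          fix i assume i: "i \<in> {1..m}"
          have "0 + (K - 1) + (i - 1) < K - 1 + m" using i assms(10) by auto
          then have "(map (\<lambda>p. z (1 + 1 + p) \<omega>) [0..<K - 1 + m]) ! (0 + (K - 1) + (i - 1))
              = z (1 + 1 + (0 + (K - 1) + (i - 1))) \<omega>" by simp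
          also have "1 + 1 + (0 + (K - 1) + (i - 1)) = 0 + K + i" using i assms(10) by auto
          finally show "gradf (w \<omega>) (z (S_before N t \<omega> + K + i) \<omega>)
              = gradf v ((map (\<lambda>p. z (1 + 1 + p) \<omega>) [0..<K - 1 + m]) ! (0 + (K - 1) + (i - 1)))"
            using wv wa Sb True by simp
        qed
        then show ?thesis unfolding B_def \<Phi>_def using spa wv wa by auto
      qed
      have bby: "B \<inter> X y \<in> sets M \<and> (1 - \<delta>) * measure M (X y) \<le> measure M (B \<inter> X y)" for y
      proof -
        have mb: "1 - \<delta> \<le> mexp P (K - 1 + m) (\<lambda>ys. if \<Phi> 0 ys then 1 else 0) ((\<lambda>_. y) (1::nat))"
          by (rule coreb) simp
        show ?thesis using blockbound[where k=1 and L="K - 1 + m" and xs="\<lambda>_. y" and \<Phi>="\<Phi> 0" and \<delta>=\<delta> and B=B and mm="t - 1" and ns=ns,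
            OF ps mc bs _ mb Bc[of _ y]] unfolding X_def by simp
      qed
      have Xs: "X y \<in> sets M" for y unfolding X_def using Nset_sets[OF bs] Eset_sets[OF mc] by blast
      have Xdisj: "disjoint_family_on X UNIV" unfolding disjoint_family_on_def X_def Eset_def by auto
      have BXdisj: "disjoint_family_on (\<lambda>y. B \<inter> X y) UNIV" using Xdisj unfolding disjoint_family_on_def by auto
      have fin: "emeasure M A \<noteq> \<infinity>" for A using emeasure_finite[of A] by simp
      have BA: "B \<inter> atom c = (\<Union>y\<in>UNIV. B \<inter> X y)" unfolding atX by auto
      have m1: "measure M (atom c) = (\<Sum>y\<in>UNIV. measure M (X y))"
        unfolding atX by (rule measure_finite_Union) (use Xs Xdisj fin in auto)
      have m2: "measure M (B \<inter> atom c) = (\<Sum>y\<in>UNIV. measure M (B \<inter> X y))"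
        unfolding BA by (rule measure_finite_Union) (use bby BXdisj fin in auto)
      have "B \<inter> atom c \<in> sets M" unfolding BA using bby by (intro sets.finite_UN) auto
      moreover have "(1 - \<delta>) * measure M (atom c) \<le> measure M (B \<inter> atom c)"
        unfolding m1 m2 sum_distrib_left by (intro sum_mono) (use bby in auto)
      ultimately show ?thesis by blast
    qed
  qed
  have Bsp: "B \<subseteq> space M" unfolding B_def by auto
  have BUN: "B = (\<Union>c\<in>UNIV. B \<inter> atom c)" using Bsp unfolding atom_def by auto
  have Bs: "B \<in> sets M"
  proof -
    have "(\<Union>c\<in>UNIV. B \<inter> atom c) \<in> sets M" by (rule sets.countable_UN''[OF cntA]) (use atomB in auto)
    then show ?thesis using BUN by simp
  qed
  have Dbound: "(1 - \<delta>) * measure M D \<le> measure M (B \<inter> D)" if D: "D \<in> sets Fm" for D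
  proof (cases "\<delta> \<ge> 1")
    case True
    then have "(1 - \<delta>) * measure M D \<le> 0" by (simp add: mult_nonpos_nonneg)
    also have "0 \<le> measure M (B \<inter> D)" by simp
    finally show ?thesis .
  next
    case False
    obtain A where DA: "D = gmap z N t -` A \<inter> space M" using D setsFm by auto
    then have DU: "D = (\<Union>c\<in>A. atom c)" using preimg by simp
    have BDU: "B \<inter> D = (\<Union>c\<in>A. B \<inter> atom c)" unfolding DU by auto
    have BAdisj: "disjoint_family_on (\<lambda>c. B \<inter> atom c) A"
      using atom_disj[of A] unfolding disjoint_family_on_def by blast
    have "emeasure M (B \<inter> D) = (\<integral>\<^sup>+c. emeasure M (B \<inter> atom c) \<partial>count_space A)"
      unfolding BDU by (rule emeasure_UN_countable) (use atomB cntA BAdisj in auto)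
    also have "\<dots> \<ge> (\<integral>\<^sup>+c. ennreal (1 - \<delta>) * emeasure M (atom c) \<partial>count_space A)"
    proof (intro nn_integral_mono)
      fix c
      have "ennreal (1 - \<delta>) * emeasure M (atom c) = ennreal ((1 - \<delta>) * measure M (atom c))"
        using False by (simp add: emeasure_eq_measure ennreal_mult)
      also have "\<dots> \<le> ennreal (measure M (B \<inter> atom c))" using atomB[of c] by (intro ennreal_leI) auto
      also have "\<dots> = emeasure M (B \<inter> atom c)" by (simp add: emeasure_eq_measure)
      finally show "ennreal (1 - \<delta>) * emeasure M (atom c) \<le> emeasure M (B \<inter> atom c)" .
    qed
    finally have "(\<integral>\<^sup>+c. ennreal (1 - \<delta>) * emeasure M (atom c) \<partial>count_space A) \<le> emeasure M (B \<inter> D)" .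
    moreover have "(\<integral>\<^sup>+c. ennreal (1 - \<delta>) * emeasure M (atom c) \<partial>count_space A)
        = ennreal (1 - \<delta>) * (\<integral>\<^sup>+c. emeasure M (atom c) \<partial>count_space A)"
      by (rule nn_integral_cmult) simp
    moreover have "(\<integral>\<^sup>+c. emeasure M (atom c) \<partial>count_space A) = emeasure M D"
      unfolding DU by (rule emeasure_UN_countable[symmetric]) (use atom_sets cntA atom_disj in auto)
    ultimately have "ennreal (1 - \<delta>) * emeasure M D \<le> emeasure M (B \<inter> D)" by simp
    then have "ennreal ((1 - \<delta>) * measure M D) \<le> ennreal (measure M (B \<inter> D))"
      using False by (simp add: emeasure_eq_measure ennreal_mult)
    then show ?thesis by (simp add: ennreal_le_iff)
  qed
  have sub: "subalgebra M Fm" unfolding subalgebra_def using spFm subFm by simp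
  interpret fms: finite_measure_subalgebra M Fm
    using finite_measure_axioms sub by (simp add: finite_measure_subalgebra_def finite_measure_subalgebra_axioms_def)
  define Y where "Y = real_cond_exp M Fm (indicator B)"
  have intB: "integrable M (indicator B :: 'a \<Rightarrow> real)"
    using Bs by (intro integrable_real_indicator) (auto simp: emeasure_eq_measure)
  have intY: "integrable M Y" unfolding Y_def by (rule fms.real_cond_exp_int(1)[OF intB])
  define Ds where "Ds = {\<omega>\<in>space M. Y \<omega> < 1 - \<delta>}"
  have DsF: "Ds \<in> sets Fm"
  proof -
    have Ym: "Y \<in> borel_measurable Fm" unfolding Y_def by (rule borel_measurable_cond_exp)
    have "Y -` {..<1 - \<delta>} \<inter> space Fm \<in> sets Fm" by (rule measurable_sets[OF Ym]) (simp add: borel_open)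
    moreover have "Y -` {..<1 - \<delta>} \<inter> space Fm = Ds" unfolding Ds_def spFm by auto
    ultimately show ?thesis by simp
  qed
  have DsM: "Ds \<in> sets M" using DsF subFm by auto
  have intA: "(\<integral>x\<in>Ds. indicator B x \<partial>M) = (\<integral>x\<in>Ds. Y x \<partial>M)"
    unfolding Y_def by (rule fms.real_cond_exp_intA[OF intB DsF])
  have lhs: "(\<integral>x\<in>Ds. indicator B x \<partial>M) = measure M (B \<inter> Ds)"
  proof -
    have "(\<lambda>x. indicator Ds x *\<^sub>R (indicator B x :: real)) = indicator (B \<inter> Ds)"
      by (auto simp: indicator_def)
    then show ?thesis unfolding set_lebesgue_integral_def using Bs DsM
      by (simp add: Int_absorb2 Int_assoc[symmetric] Bsp)
  qed
  define fD where "fD x = indicator Ds x *\<^sub>R ((1 - \<delta>) - Y x)" for x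
  have intD: "integrable M (indicator Ds :: 'a \<Rightarrow> real)"
    using DsM by (intro integrable_real_indicator) (auto simp: emeasure_eq_measure)
  have intYD: "integrable M (\<lambda>x. indicator Ds x *\<^sub>R Y x)" by (rule integrable_mult_indicator[OF DsM intY])
  have intf: "integrable M fD" unfolding fD_def
    by (rule integrable_mult_indicator[OF DsM]) (use intY in simp)
  have fnn: "0 \<le> fD x" for x unfolding fD_def Ds_def by (auto simp: indicator_def)
  have "integral\<^sup>L M fD = (\<integral>x. indicator Ds x * (1 - \<delta>) \<partial>M) - (\<integral>x. indicator Ds x *\<^sub>R Y x \<partial>M)"
  proof -
    have "fD = (\<lambda>x. indicator Ds x * (1 - \<delta>) - indicator Ds x *\<^sub>R Y x)"
      unfolding fD_def by (auto simp: fun_eq_iff algebra_simps)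
    then show ?thesis using intD intYD
      by (simp add: Bochner_Integration.integral_diff)
  qed
  also have "(\<integral>x. indicator Ds x * (1 - \<delta>) \<partial>M) = measure M Ds * (1 - \<delta>)"
    using intD DsM by (simp add: Int_absorb2 sets.sets_into_space)
  also have "(\<integral>x. indicator Ds x *\<^sub>R Y x \<partial>M) = measure M (B \<inter> Ds)"
    using intA lhs unfolding set_lebesgue_integral_def by simp
  finally have "integral\<^sup>L M fD \<le> 0" using Dbound[OF DsF] by (simp add: mult.commute)
  moreover have "integral\<^sup>L M fD \<ge> 0" using fnn by (simp add: integral_nonneg)
  ultimately have "integral\<^sup>L M fD = 0" by simp
  then have AE0: "AE x in M. fD x = 0" using integral_nonneg_eq_0_iff_AE[OF intf] fnn by simp
  have "AE x in M. 1 - \<delta> \<le> Y x"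
    using AE0 AE_space
  proof eventually_elim
    case (elim x)
    show ?case
    proof (rule ccontr)
      assume "\<not> 1 - \<delta> \<le> Y x"
      then have "x \<in> Ds" "Y x < 1 - \<delta>" using elim unfolding Ds_def by auto
      then have "fD x > 0" unfolding fD_def by simp
      then show False using elim by simp
    qed
  qed
  then show ?thesis unfolding Y_def Fm_def B_def thr_def .
qed


end
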